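(* Let $(\omega,\nabla)$ be Poisson-compatible. For 1-forms $\eta=\eta_pdx^p$, $\xi=\xi_jdx^j$, $$\wedge_1(\sigma_Q+\mathrm{id}^{\otimes2})(\eta\otimes_1\xi)=\tfrac12\lambda\,\xi_j\eta_p\,\omega^{ji}T^p{}_{nk;i}\,dx^k\wedge dx^n,$$ so the quantum torsion $\wedge_1\nabla_Q-d$ of $\nabla_Q$ is a right $A_1$-module map if and only if $\omega^{ji}T^p{}_{nk;i}=0$ for all indices.
   Context: Coordinates $x^i$, summation convention. $\nabla_jdx^i=-\Gamma^i_{jk}dx^k$; torsion $T^i_{jk}=\Gamma^i_{jk}-\Gamma^i_{kj}$; curvature $[\nabla_i,\nabla_j]dx^k=-R^k{}_{mij}dx^m$; semicolon = covariant derivative w.r.t. $\nabla$. Poisson-compatible: $d(\omega^{ij})-\omega^{kj}\nabla_k(dx^i)-\omega^{ik}\nabla_k(dx^j)=0$. Work over $\mathbb{C}[\lambda]/(\lambda^2)$. $A_1$: functions with $a\bullet b=ab+\frac\lambda2\omega^{ij}a_{,i}b_{,j}$; $\Omega^1A_1$: 1-forms with $a\bullet\xi=a\xi+\frac\lambda2\omega^{ij}a_{,i}\nabla_j\xi$, $\xi\bullet a=a\xi-\frac\lambda2\omega^{ij}a_{,i}\nabla_j\xi$; $\otimes_1$ over $A_1$; $q(\xi\otimes_1\eta)=\xi\otimes_0\eta+\frac\lambda2\omega^{ij}\nabla_i\xi\otimes_0\nabla_j\eta$. $\nabla_Q\xi=q^{-1}(dx^k\otimes_0\nabla_k\xi)-\frac\lambda2\omega^{ij}dx^k\otimes_1[\nabla_k,\nabla_j]\nabla_i\xi$,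 $\sigma_Q(\eta\otimes_1\xi)=\xi\otimes_1\eta+\lambda\omega^{ij}\nabla_j\xi\otimes_1\nabla_i\eta+\lambda\omega^{ij}\xi_jdx^k\otimes_1[\nabla_k,\nabla_i]\eta$. $\xi\wedge_1\eta=\xi\wedge\eta+\frac\lambda2\omega^{ij}\nabla_i\xi\wedge\nabla_j\eta+\lambda(-1)^{|\xi|+1}H^{ij}\wedge(\partial_i\lrcorner\xi)\wedge(\partial_j\lrcorner\eta)$, $H^{ij}=\frac14\omega^{is}(T^j{}_{nm;s}-2R^j{}_{nms})dx^m\wedge dx^n$. *)

theory Defs
  imports "HOL-Analysis.Analysis"
begin

text \<open>Local coordinate setting: an open set U in R^n (index type 'n), functions are
complex valued (we work over C), the Poisson bivector omega^{ij} and the Christoffel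
symbols Gamma^i_{jk} (written Ga i j k) are real valued.
A 1-form xi = xi_m dx^m is its component function 'n => (real^'n => complex).
An element of C[lambda]/(lambda^2) tensor V is a pair (order 0 part, order 1 part).\<close>

type_synonym 'n fn = "real^'n \<Rightarrow> complex"
type_synonym 'n form1 = "'n \<Rightarrow> real^'n \<Rightarrow> complex"
type_synonym 'n ten2 = "'n \<Rightarrow> 'n \<Rightarrow> real^'n \<Rightarrow> complex"
type_synonym 'n bivec = "'n \<Rightarrow> 'n \<Rightarrow> real^'n \<Rightarrow> real"
type_synonym 'n chris = "'n \<Rightarrow> 'n \<Rightarrow> 'n \<Rightarrow> real^'n \<Rightarrow> real"

definition pd :: "'n::finite \<Rightarrow> (real^'n \<Rightarrow> 'b::real_normed_vector) \<Rightarrow> real^'n \<Rightarrow> 'b" where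
  "pd i f x = vector_derivative (\<lambda>t. f (x + t *\<^sub>R axis i 1)) (at 0)"

fun pds :: "'n::finite list \<Rightarrow> (real^'n \<Rightarrow> 'b::real_normed_vector) \<Rightarrow> real^'n \<Rightarrow> 'b" where
  "pds [] f = f"
| "pds (i # is) f = pd i (pds is f)"

definition smooth_on :: "(real^'n::finite) set \<Rightarrow> (real^'n \<Rightarrow> 'b::real_normed_vector) \<Rightarrow> bool" where
  "smooth_on U f \<longleftrightarrow> (\<forall>is. \<forall>x\<in>U. pds is f differentiable (at x))"

definition lsmooth1 :: "(real^'n::finite) set \<Rightarrow> 'n form1 \<times> 'n form1 \<Rightarrow> bool" where
  "lsmooth1 U xi \<longleftrightarrow> (\<forall>m. smooth_on U (fst xi m) \<and> smooth_on U (snd xi m))"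

definition lsmooth0 :: "(real^'n::finite) set \<Rightarrow> 'n fn \<times> 'n fn \<Rightarrow> bool" where
  "lsmooth0 U a \<longleftrightarrow> smooth_on U (fst a) \<and> smooth_on U (snd a)"

text \<open>Covariant derivative nabla_j of a 1-form, from nabla_j dx^i = - Gamma^i_{jk} dx^k.\<close>
definition cd :: "'n::finite chris \<Rightarrow> 'n \<Rightarrow> 'n form1 \<Rightarrow> 'n form1" where
  "cd Ga j xi = (\<lambda>k x. pd j (xi k) x - (\<Sum>i\<in>UNIV. complex_of_real (Ga i j k x) * xi i x))"

definition dxf :: "'n::finite \<Rightarrow> 'n form1" where
  "dxf k = (\<lambda>m x. if m = k then 1 else 0)"

definition comm :: "'n::finite chris \<Rightarrow> 'n \<Rightarrow> 'n \<Rightarrow> 'n form1 \<Rightarrow> 'n form1" where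
  "comm Ga k j a = (\<lambda>m x. cd Ga k (cd Ga j a) m x - cd Ga j (cd Ga k a) m x)"

text \<open>Curvature R^k_{m i j}, defined by [nabla_i, nabla_j] dx^k = - R^k_{m i j} dx^m.\<close>
definition curv :: "'n::finite chris \<Rightarrow> 'n \<Rightarrow> 'n \<Rightarrow> 'n \<Rightarrow> 'n \<Rightarrow> real^'n \<Rightarrow> complex" where
  "curv Ga k m i j x = - comm Ga i j (dxf k) m x"

definition tors :: "'n::finite chris \<Rightarrow> 'n \<Rightarrow> 'n \<Rightarrow> 'n \<Rightarrow> real^'n \<Rightarrow> real" where
  "tors Ga p n k x = Ga p n k x - Ga p k n x"

definition tors_cov :: "'n::finite chris \<Rightarrow> 'n \<Rightarrow> 'n \<Rightarrow> 'n \<Rightarrow> 'n \<Rightarrow> real^'n \<Rightarrow> real" where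
  "tors_cov Ga p n k i x = pd i (tors Ga p n k) x
     + (\<Sum>s\<in>UNIV. Ga p i s x * tors Ga s n k x)
     - (\<Sum>s\<in>UNIV. Ga s i n x * tors Ga p s k x)
     - (\<Sum>s\<in>UNIV. Ga s i k x * tors Ga p n s x)"

text \<open>Coefficient of dx^m wedge dx^n in H^{ij}.\<close>
definition Hc :: "'n::finite bivec \<Rightarrow> 'n chris \<Rightarrow> 'n \<Rightarrow> 'n \<Rightarrow> 'n \<Rightarrow> 'n \<Rightarrow> real^'n \<Rightarrow> complex" where
  "Hc om Ga i j m n x = (1/4) * (\<Sum>s\<in>UNIV. complex_of_real (om i s x) *
       (complex_of_real (tors_cov Ga j n m s x) - 2 * curv Ga j n m s x))"

text \<open>A 2-form given by a coefficient array c (meaning sum c_{mn} dx^m wedge dx^n)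
is identified with its alternating components alt c.\<close>
definition alt :: "'n ten2 \<Rightarrow> 'n ten2" where
  "alt c = (\<lambda>m n x. c m n x - c n m x)"

definition tprod :: "'n form1 \<Rightarrow> 'n form1 \<Rightarrow> 'n ten2" where
  "tprod a b = (\<lambda>m n x. a m x * b n x)"

definition tadd :: "'n ten2 \<Rightarrow> 'n ten2 \<Rightarrow> 'n ten2" where
  "tadd s t = (\<lambda>m n x. s m n x + t m n x)"

definition tsub :: "'n ten2 \<Rightarrow> 'n ten2 \<Rightarrow> 'n ten2" where
  "tsub s t = (\<lambda>m n x. s m n x - t m n x)"

definition ladd :: "'n ten2 \<times> 'n ten2 \<Rightarrow> 'n ten2 \<times> 'n ten2 \<Rightarrow> 'n ten2 \<times> 'n ten2" where
  "ladd p r = (tadd (fst p) (fst r), tadd (snd p) (snd r))"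

definition lsub :: "'n ten2 \<times> 'n ten2 \<Rightarrow> 'n ten2 \<times> 'n ten2 \<Rightarrow> 'n ten2 \<times> 'n ten2" where
  "lsub p r = (tsub (fst p) (fst r), tsub (snd p) (snd r))"

text \<open>xi wedge_1 eta for 1-forms xi, eta in Omega^1 A_1 (alternating components, order 0 and 1).
Here (-1)^(|xi|+1) = 1.\<close>
definition wedge1 :: "'n::finite bivec \<Rightarrow> 'n chris \<Rightarrow> 'n form1 \<times> 'n form1 \<Rightarrow> 'n form1 \<times> 'n form1
    \<Rightarrow> 'n ten2 \<times> 'n ten2" where
  "wedge1 om Ga xi eta =
    (alt (tprod (fst xi) (fst eta)),
     alt (\<lambda>m n x. tprod (fst xi) (snd eta) m n x + tprod (snd xi) (fst eta) m n x
        + (1/2) * (\<Sum>i\<in>UNIV. \<Sum>j\<in>UNIV. complex_of_real (om i j x) *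
                      tprod (cd Ga i (fst xi)) (cd Ga j (fst eta)) m n x)
        + (\<Sum>i\<in>UNIV. \<Sum>j\<in>UNIV. Hc om Ga i j m n x * fst xi i x * fst eta j x)))"

text \<open>Omega^1 A_1 tensor_1 Omega^1 A_1 is represented through the isomorphism q onto
Omega^1 tensor_0 Omega^1 [lambda]; tens1 xi eta is q(xi tensor_1 eta).\<close>
definition tens1 :: "'n::finite bivec \<Rightarrow> 'n chris \<Rightarrow> 'n form1 \<times> 'n form1 \<Rightarrow> 'n form1 \<times> 'n form1
    \<Rightarrow> 'n ten2 \<times> 'n ten2" where
  "tens1 om Ga xi eta =
    (tprod (fst xi) (fst eta),
     (\<lambda>m n x. tprod (fst xi) (snd eta) m n x + tprod (snd xi) (fst eta) m n x
        + (1/2) * (\<Sum>i\<in>UNIV. \<Sum>j\<in>UNIV. complex_of_real (om i j x) *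
                      tprod (cd Ga i (fst xi)) (cd Ga j (fst eta)) m n x)))"

definition wedgeQ :: "'n::finite bivec \<Rightarrow> 'n chris \<Rightarrow> 'n ten2 \<times> 'n ten2 \<Rightarrow> 'n ten2 \<times> 'n ten2" where
  "wedgeQ om Ga = (THE W. (\<forall>s t. W (ladd s t) = ladd (W s) (W t)) \<and>
                          (\<forall>xi eta. W (tens1 om Ga xi eta) = wedge1 om Ga xi eta))"

definition zten :: "'n ten2" where
  "zten = (\<lambda>m n x. 0)"

definition sigmaQ_el :: "'n::finite bivec \<Rightarrow> 'n chris \<Rightarrow> 'n form1 \<times> 'n form1 \<Rightarrow> 'n form1 \<times> 'n form1
    \<Rightarrow> 'n ten2 \<times> 'n ten2" where
  "sigmaQ_el om Ga eta xi = ladd (tens1 om Ga xi eta)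
     (zten, (\<lambda>m n x. (\<Sum>i\<in>UNIV. \<Sum>j\<in>UNIV. complex_of_real (om i j x) *
                         tprod (cd Ga j (fst xi)) (cd Ga i (fst eta)) m n x)
        + (\<Sum>i\<in>UNIV. \<Sum>j\<in>UNIV. \<Sum>k\<in>UNIV. complex_of_real (om i j x) * fst xi j x *
                         tprod (dxf k) (comm Ga k i (fst eta)) m n x)))"

text \<open>nabla_Q xi, in the q-representation (q^{-1}(dx^k tensor_0 nabla_k xi) is represented by
dx^k tensor_0 nabla_k xi itself).\<close>
definition nablaQ :: "'n::finite bivec \<Rightarrow> 'n chris \<Rightarrow> 'n form1 \<times> 'n form1 \<Rightarrow> 'n ten2 \<times> 'n ten2" where
  "nablaQ om Ga xi =
    ((\<lambda>k b x. cd Ga k (fst xi) b x),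
     (\<lambda>k b x. cd Ga k (snd xi) b x
        - (1/2) * (\<Sum>i\<in>UNIV. \<Sum>j\<in>UNIV. complex_of_real (om i j x) *
                     comm Ga k j (cd Ga i (fst xi)) b x)))"

definition dform :: "'n::finite form1 \<times> 'n form1 \<Rightarrow> 'n ten2 \<times> 'n ten2" where
  "dform xi = (alt (\<lambda>m n x. pd m (fst xi n) x), alt (\<lambda>m n x. pd m (snd xi n) x))"

definition torsQ :: "'n::finite bivec \<Rightarrow> 'n chris \<Rightarrow> 'n form1 \<times> 'n form1 \<Rightarrow> 'n ten2 \<times> 'n ten2" where
  "torsQ om Ga xi = lsub (wedgeQ om Ga (nablaQ om Ga xi)) (dform xi)"

definition cd2 :: "'n::finite chris \<Rightarrow> 'n \<Rightarrow> 'n ten2 \<Rightarrow> 'n ten2" where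
  "cd2 Ga j c = (\<lambda>m n x. pd j (c m n) x
      - (\<Sum>p\<in>UNIV. complex_of_real (Ga p j m x) * c p n x)
      - (\<Sum>p\<in>UNIV. complex_of_real (Ga p j n x) * c m p x))"

definition ract1 :: "'n::finite bivec \<Rightarrow> 'n chris \<Rightarrow> 'n form1 \<times> 'n form1 \<Rightarrow> 'n fn \<times> 'n fn
    \<Rightarrow> 'n form1 \<times> 'n form1" where
  "ract1 om Ga xi a =
    ((\<lambda>m x. fst a x * fst xi m x),
     (\<lambda>m x. fst a x * snd xi m x + snd a x * fst xi m x
        - (1/2) * (\<Sum>i\<in>UNIV. \<Sum>j\<in>UNIV. complex_of_real (om i j x) * pd i (fst a) x *
                     cd Ga j (fst xi) m x)))"

definition ract2 :: "'n::finite bivec \<Rightarrow> 'n chris \<Rightarrow> 'n ten2 \<times> 'n ten2 \<Rightarrow> 'n fn \<times> 'n fn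
    \<Rightarrow> 'n ten2 \<times> 'n ten2" where
  "ract2 om Ga c a =
    ((\<lambda>m n x. fst a x * fst c m n x),
     (\<lambda>m n x. fst a x * snd c m n x + snd a x * fst c m n x
        - (1/2) * (\<Sum>i\<in>UNIV. \<Sum>j\<in>UNIV. complex_of_real (om i j x) * pd i (fst a) x *
                     cd2 Ga j (fst c) m n x)))"

definition right_module_map :: "(real^'n::finite) set \<Rightarrow> 'n bivec \<Rightarrow> 'n chris
    \<Rightarrow> ('n form1 \<times> 'n form1 \<Rightarrow> 'n ten2 \<times> 'n ten2) \<Rightarrow> bool" where
  "right_module_map U om Ga T \<longleftrightarrow>
     (\<forall>xi a. lsmooth1 U xi \<and> lsmooth0 U a \<longrightarrow>
        (\<forall>x\<in>U. \<forall>m n.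
           fst (T (ract1 om Ga xi a)) m n x = fst (ract2 om Ga (T xi) a) m n x \<and>
           snd (T (ract1 om Ga xi a)) m n x = snd (ract2 om Ga (T xi) a) m n x))"

definition poisson_bivector :: "(real^'n::finite) set \<Rightarrow> 'n bivec \<Rightarrow> bool" where
  "poisson_bivector U om \<longleftrightarrow>
     (\<forall>x\<in>U. \<forall>i j. om i j x = - om j i x) \<and>
     (\<forall>x\<in>U. \<forall>i j k. (\<Sum>l\<in>UNIV. om i l x * pd l (om j k) x + om j l x * pd l (om k i) x
                                   + om k l x * pd l (om i j) x) = 0)"

definition poisson_compatible :: "(real^'n::finite) set \<Rightarrow> 'n bivec \<Rightarrow> 'n chris \<Rightarrow> bool" where
  "poisson_compatible U om Ga \<longleftrightarrow>
     (\<forall>x\<in>U. \<forall>i j m. complex_of_real (pd m (om i j) x)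
        - (\<Sum>k\<in>UNIV. complex_of_real (om k j x) * cd Ga k (dxf i) m x)
        - (\<Sum>k\<in>UNIV. complex_of_real (om i k x) * cd Ga k (dxf j) m x) = 0)"

end

theory Submission
  imports Defs "HOL-Analysis.Analysis"
begin


lemma pd_has_derivative:
  fixes f :: "real^'n::finite \<Rightarrow> 'b::real_normed_vector"
  assumes "(f has_derivative f') (at x)"
  shows "pd i f x = f' (axis i 1)"
proof -
  have l: "bounded_linear f'" using assms has_derivative_bounded_linear by blast
  have "((\<lambda>t. x + t *\<^sub>R axis i 1) has_derivative (\<lambda>t. t *\<^sub>R axis i 1)) (at 0)"
    by (auto intro!: derivative_eq_intros)
  moreover have "(f has_derivative f') (at (x + 0 *\<^sub>R axis i 1))" using assms by simp
  ultimately have "((\<lambda>t. f (x + t *\<^sub>R axis i 1)) has_derivative (\<lambda>t. f' (t *\<^sub>R axis i 1))) (at 0)"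
    using has_derivative_compose[of "\<lambda>t. x + t *\<^sub>R axis i 1" _ 0 UNIV f f'] by (simp add: o_def)
  hence "((\<lambda>t. f (x + t *\<^sub>R axis i 1)) has_vector_derivative f' (axis i 1)) (at 0)"
    unfolding has_vector_derivative_def using l by (simp add: linear.scaleR[OF bounded_linear.linear[OF l]])
  thus ?thesis unfolding pd_def by (rule vector_derivative_at)
qed

lemma pd_const[simp]: "pd i (\<lambda>y. c) x = 0"
  by (rule trans[OF pd_has_derivative[OF has_derivative_const]]) simp

lemma pd_add:
  fixes f g :: "real^'n::finite \<Rightarrow> 'b::real_normed_vector"
  assumes "f differentiable (at x)" "g differentiable (at x)"
  shows "pd i (\<lambda>y. f y + g y) x = pd i f x + pd i g x"
proof -
  obtain f' g' where f: "(f has_derivative f') (at x)" and g: "(g has_derivative g') (at x)"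
    using assms unfolding differentiable_def by blast
  show ?thesis using pd_has_derivative[OF has_derivative_add[OF f g]] pd_has_derivative[OF f] pd_has_derivative[OF g]
    by simp
qed

lemma pd_diff:
  fixes f g :: "real^'n::finite \<Rightarrow> 'b::real_normed_vector"
  assumes "f differentiable (at x)" "g differentiable (at x)"
  shows "pd i (\<lambda>y. f y - g y) x = pd i f x - pd i g x"
proof -
  obtain f' g' where f: "(f has_derivative f') (at x)" and g: "(g has_derivative g') (at x)"
    using assms unfolding differentiable_def by blast
  show ?thesis using pd_has_derivative[OF has_derivative_diff[OF f g]] pd_has_derivative[OF f] pd_has_derivative[OF g]
    by simp
qed

lemma pd_minus:
  fixes f :: "real^'n::finite \<Rightarrow> 'b::real_normed_vector"
  assumes "f differentiable (at x)"
  shows "pd i (\<lambda>y. - f y) x = - pd i f x"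
proof -
  obtain f' where f: "(f has_derivative f') (at x)"
    using assms unfolding differentiable_def by blast
  show ?thesis using pd_has_derivative[OF has_derivative_minus[OF f]] pd_has_derivative[OF f]
    by simp
qed

lemma pd_mult:
  fixes f g :: "real^'n::finite \<Rightarrow> 'b::real_normed_algebra"
  assumes "f differentiable (at x)" "g differentiable (at x)"
  shows "pd i (\<lambda>y. f y * g y) x = f x * pd i g x + pd i f x * g x"
proof -
  obtain f' g' where f: "(f has_derivative f') (at x)" and g: "(g has_derivative g') (at x)"
    using assms unfolding differentiable_def by blast
  show ?thesis using pd_has_derivative[OF has_derivative_mult[OF f g]] pd_has_derivative[OF f] pd_has_derivative[OF g]
    by simp
qed

lemma pd_cmult:
  fixes f :: "real^'n::finite \<Rightarrow> 'b::real_normed_algebra"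
  assumes "f differentiable (at x)"
  shows "pd i (\<lambda>y. c * f y) x = c * pd i f x"
  using pd_mult[OF differentiable_const assms, of i c] by simp

lemma pd_of_real:
  fixes f :: "real^'n::finite \<Rightarrow> real"
  assumes "f differentiable (at x)"
  shows "pd i (\<lambda>y. (of_real (f y) :: 'b::real_normed_algebra_1)) x = of_real (pd i f x)"
proof -
  obtain f' where f: "(f has_derivative f') (at x)"
    using assms unfolding differentiable_def by blast
  show ?thesis using pd_has_derivative[OF has_derivative_of_real[OF f]] pd_has_derivative[OF f]
    by simp
qed

lemma pd_sum:
  fixes f :: "'a \<Rightarrow> real^'n::finite \<Rightarrow> 'b::real_normed_vector"
  assumes "finite A" "\<And>k. k \<in> A \<Longrightarrow> f k differentiable (at x)"
  shows "pd i (\<lambda>y. \<Sum>k\<in>A. f k y) x = (\<Sum>k\<in>A. pd i (f k) x)"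
  using assms
proof (induction A rule: finite_induct)
  case empty then show ?case by simp
next
  case (insert a A)
  have d: "(\<lambda>y. \<Sum>k\<in>A. f k y) differentiable (at x)"
    using insert by (intro differentiable_sum) auto
  have "pd i (\<lambda>y. \<Sum>k\<in>insert a A. f k y) x = pd i (\<lambda>y. f a y + (\<Sum>k\<in>A. f k y)) x"
    using insert by simp
  also have "\<dots> = pd i (f a) x + pd i (\<lambda>y. \<Sum>k\<in>A. f k y) x"
    using pd_add[OF _ d, of "f a"] insert by simp
  finally show ?case using insert by simp
qed

lemma pd_coord: "pd i (\<lambda>y. y $ j) x = (if i = j then 1 else 0)"
proof -
  have "((\<lambda>y. y $ j) has_derivative (\<lambda>y. y $ j)) (at x)"
    using bounded_linear_vec_nth[of j] bounded_linear_imp_has_derivative by blast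
  from pd_has_derivative[OF this, of i] show ?thesis by (simp add: axis_def)
qed

lemma pd_local:
  fixes f g :: "real^'n::finite \<Rightarrow> 'b::real_normed_vector"
  assumes "open U" "x \<in> U" "\<And>y. y \<in> U \<Longrightarrow> f y = g y"
  shows "pd i f x = pd i g x"
proof -
  let ?S = "(\<lambda>t::real. x + t *\<^sub>R axis i 1) -` U"
  have oS: "open ?S"
    by (rule open_vimage[OF assms(1)]) (intro continuous_intros)
  have S0: "0 \<in> ?S" using assms by simp
  have e: "\<And>t. t \<in> ?S \<Longrightarrow> f (x + t *\<^sub>R axis i 1) = g (x + t *\<^sub>R axis i 1)"
    using assms(3) by simp
  have "\<And>v. ((\<lambda>t. f (x + t *\<^sub>R axis i 1)) has_vector_derivative v) (at 0) \<longleftrightarrow>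
            ((\<lambda>t. g (x + t *\<^sub>R axis i 1)) has_vector_derivative v) (at 0)"
  proof
    fix v assume h: "((\<lambda>t. f (x + t *\<^sub>R axis i 1)) has_vector_derivative v) (at 0)"
    show "((\<lambda>t. g (x + t *\<^sub>R axis i 1)) has_vector_derivative v) (at 0)"
      by (rule has_vector_derivative_transform_within_open[OF _ oS S0], rule h, rule e)
  next
    fix v assume h: "((\<lambda>t. g (x + t *\<^sub>R axis i 1)) has_vector_derivative v) (at 0)"
    show "((\<lambda>t. f (x + t *\<^sub>R axis i 1)) has_vector_derivative v) (at 0)"
      by (rule has_vector_derivative_transform_within_open[OF _ oS S0], rule h, rule e[symmetric])
  qed
  thus ?thesis unfolding pd_def vector_derivative_def by simp
qed

lemma differentiable_local:
  fixes f g :: "real^'n::finite \<Rightarrow> 'b::real_normed_vector"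
  assumes "open U" "x \<in> U" "\<And>y. y \<in> U \<Longrightarrow> f y = g y" "f differentiable (at x)"
  shows "g differentiable (at x)"
proof -
  obtain f' where "(f has_derivative f') (at x)" using assms(4) unfolding differentiable_def by blast
  from has_derivative_transform_within_open[OF this assms(1,2,3)] show ?thesis
    unfolding differentiable_def by blast
qed

lemma pds_append: "pds (is @ [i]) f = pds is (pd i f)"
  by (induction "is") auto

lemma smooth_diffble: "smooth_on U f \<Longrightarrow> x \<in> U \<Longrightarrow> f differentiable (at x)"
  unfolding smooth_on_def by (metis pds.simps(1))

lemma smooth_pd: "smooth_on U f \<Longrightarrow> smooth_on U (pd i f)"
  unfolding smooth_on_def by (metis pds_append)


lemma line_deriv:
  fixes f :: "real^'n::finite \<Rightarrow> 'b::real_normed_vector"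
  assumes "(f has_derivative F) (at (c + t *\<^sub>R a))"
  shows "((\<lambda>t. f (c + t *\<^sub>R a)) has_derivative (\<lambda>s. s *\<^sub>R F a)) (at t)"
proof -
  have l: "bounded_linear F" using assms has_derivative_bounded_linear by blast
  have "((\<lambda>t. c + t *\<^sub>R a) has_derivative (\<lambda>s. s *\<^sub>R a)) (at t)"
    by (auto intro!: derivative_eq_intros)
  from has_derivative_compose[OF this assms] show ?thesis
    by (simp add: o_def linear.scaleR[OF bounded_linear.linear[OF l]])
qed

lemma young_bound:
  fixes f :: "real^'n::finite \<Rightarrow> 'b::real_normed_vector"
  assumes U: "open U" "x \<in> U" and fd: "\<And>y. y \<in> U \<Longrightarrow> f differentiable (at y)"
    and L: "(pd i f has_derivative L) (at x)" and e: "e > 0" and nb: "norm b = 1"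
  shows "\<exists>d>0. \<forall>h. \<bar>h\<bar> < d \<longrightarrow>
     norm (f (x + h *\<^sub>R axis i 1 + h *\<^sub>R b) - f (x + h *\<^sub>R axis i 1) - f (x + h *\<^sub>R b) + f x
           - (h * h) *\<^sub>R L b) \<le> 3 * e * (h * h)"
proof -
  let ?a = "axis i (1::real) :: real^'n"
  have lL: "bounded_linear L" using L has_derivative_bounded_linear by blast
  obtain d1 where d1: "d1 > 0" "\<And>y. norm (y - x) < d1 \<Longrightarrow>
      norm (pd i f y - pd i f x - L (y - x)) \<le> e * norm (y - x)"
    using L e unfolding has_derivative_at_alt by blast
  obtain d2 where d2: "d2 > 0" "ball x d2 \<subseteq> U" using U open_contains_ball by blast
  define d where "d = min d1 d2 / 2"
  have dpos: "d > 0" using d1 d2 d_def by simp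
  show ?thesis
  proof (intro exI[of _ d] conjI allI impI dpos)
    fix h :: real assume hd: "\<bar>h\<bar> < d"
    let ?S = "closed_segment 0 h"
    have tS: "\<bar>t\<bar> \<le> \<bar>h\<bar>" if "t \<in> ?S" for t
      using that by (auto simp: closed_segment_eq_real_ivl split: if_splits)
    have nrm: "norm (t *\<^sub>R ?a + s *\<^sub>R b) \<le> \<bar>t\<bar> + \<bar>s\<bar>" for t s
      using norm_triangle_ineq[of "t *\<^sub>R ?a" "s *\<^sub>R b"] nb by simp
    define K where "K t = f (x + t *\<^sub>R ?a + h *\<^sub>R b) - f (x + t *\<^sub>R ?a) - (t * h) *\<^sub>R L b" for t
    define K' where "K' t = (\<lambda>s. s *\<^sub>R (pd i f (x + t *\<^sub>R ?a + h *\<^sub>R b) - pd i f (x + t *\<^sub>R ?a) - h *\<^sub>R L b))" for t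
    have inU: "x + t *\<^sub>R ?a + s *\<^sub>R b \<in> U" if "\<bar>t\<bar> \<le> \<bar>h\<bar>" "\<bar>s\<bar> \<le> \<bar>h\<bar>" for t s
    proof -
      have "norm (x + t *\<^sub>R ?a + s *\<^sub>R b - x) \<le> \<bar>t\<bar> + \<bar>s\<bar>" using nrm[of t s] by (simp add: add.assoc)
      also have "\<dots> < d2" using that hd d_def d1 d2 by auto
      finally have "dist (x + t *\<^sub>R ?a + s *\<^sub>R b) x < d2" by (simp add: dist_norm)
      hence "x + t *\<^sub>R ?a + s *\<^sub>R b \<in> ball x d2" by (simp add: dist_commute)
      thus ?thesis using d2 by blast
    qed
    have derK: "(K has_derivative K' t) (at t within ?S)" if "t \<in> ?S" for t
    proof -
      have t: "\<bar>t\<bar> \<le> \<bar>h\<bar>" using tS that by blast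
      have u1: "x + h *\<^sub>R b + t *\<^sub>R ?a \<in> U" using inU[OF t, of h] by (simp add: ac_simps)
      have u2: "x + t *\<^sub>R ?a \<in> U" using inU[OF t, of 0] by simp
      obtain F1 where F1: "(f has_derivative F1) (at (x + h *\<^sub>R b + t *\<^sub>R ?a))"
        using fd[OF u1] unfolding differentiable_def by blast
      obtain F2 where F2: "(f has_derivative F2) (at (x + t *\<^sub>R ?a))"
        using fd[OF u2] unfolding differentiable_def by blast
      have p1: "pd i f (x + t *\<^sub>R ?a + h *\<^sub>R b) = F1 ?a"
        using pd_has_derivative[OF F1, of i] by (simp add: ac_simps)
      have p2: "pd i f (x + t *\<^sub>R ?a) = F2 ?a" using pd_has_derivative[OF F2] .
      have g1: "((\<lambda>t. f (x + h *\<^sub>R b + t *\<^sub>R ?a)) has_derivative (\<lambda>s. s *\<^sub>R F1 ?a)) (at t)"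
        by (rule line_deriv[OF F1])
      have g2: "((\<lambda>t. f (x + t *\<^sub>R ?a)) has_derivative (\<lambda>s. s *\<^sub>R F2 ?a)) (at t)"
        by (rule line_deriv[OF F2])
      have g3: "((\<lambda>t. (t * h) *\<^sub>R L b) has_derivative (\<lambda>s. (s * h) *\<^sub>R L b)) (at t)"
        by (auto intro!: derivative_eq_intros)
      have "((\<lambda>t. f (x + h *\<^sub>R b + t *\<^sub>R ?a) - f (x + t *\<^sub>R ?a) - (t * h) *\<^sub>R L b)
              has_derivative (\<lambda>s. s *\<^sub>R F1 ?a - s *\<^sub>R F2 ?a - (s * h) *\<^sub>R L b)) (at t)"
        by (intro has_derivative_diff g1 g2 g3)
      moreover have "(\<lambda>t. f (x + h *\<^sub>R b + t *\<^sub>R ?a) - f (x + t *\<^sub>R ?a) - (t * h) *\<^sub>R L b) = K"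
        by (rule ext) (simp add: K_def ac_simps)
      moreover have "(\<lambda>s. s *\<^sub>R F1 ?a - s *\<^sub>R F2 ?a - (s * h) *\<^sub>R L b) = K' t"
        by (rule ext) (simp add: K'_def p1 p2 scaleR_diff_right)
      ultimately have "(K has_derivative K' t) (at t)" by simp
      thus ?thesis by (rule has_derivative_at_withinI)
    qed
    have bnd: "onorm (K' t) \<le> 3 * e * \<bar>h\<bar>" if "t \<in> ?S" for t
    proof -
      have t: "\<bar>t\<bar> \<le> \<bar>h\<bar>" using tS that by blast
      let ?y1 = "x + t *\<^sub>R ?a + h *\<^sub>R b" and ?y2 = "x + t *\<^sub>R ?a"
      have n1: "norm (?y1 - x) \<le> 2 * \<bar>h\<bar>" using nrm[of t h] t by (simp add: add.assoc)
      have n2: "norm (?y2 - x) \<le> \<bar>h\<bar>" using t by simp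
      have "2 * \<bar>h\<bar> < d1" using hd d_def by auto
      hence "norm (?y1 - x) < d1" using n1 by linarith
      hence r1: "norm (pd i f ?y1 - pd i f x - L (?y1 - x)) \<le> e * norm (?y1 - x)"
        by (rule d1(2))
      have "norm (?y2 - x) < d1" using n2 hd d_def by linarith
      hence r2: "norm (pd i f ?y2 - pd i f x - L (?y2 - x)) \<le> e * norm (?y2 - x)"
        by (rule d1(2))
      have "L (?y1 - x) - L (?y2 - x) = L ((?y1 - x) - (?y2 - x))"
        using linear_diff[OF bounded_linear.linear[OF lL]] by metis
      also have "\<dots> = L (h *\<^sub>R b)" by (simp add: algebra_simps)
      also have "\<dots> = h *\<^sub>R L b" by (rule linear.scaleR[OF bounded_linear.linear[OF lL]])
      finally have Leq: "L (?y1 - x) - L (?y2 - x) = h *\<^sub>R L b" .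
      have "pd i f ?y1 - pd i f ?y2 - h *\<^sub>R L b =
             (pd i f ?y1 - pd i f x - L (?y1 - x)) - (pd i f ?y2 - pd i f x - L (?y2 - x))"
        using Leq by (simp add: algebra_simps)
      hence "norm (pd i f ?y1 - pd i f ?y2 - h *\<^sub>R L b) \<le> e * norm (?y1 - x) + e * norm (?y2 - x)"
        using norm_triangle_ineq4 r1 r2 by (smt (verit))
      also have "\<dots> \<le> e * (2 * \<bar>h\<bar>) + e * \<bar>h\<bar>"
        using n1 n2 e by (intro add_mono mult_left_mono) auto
      finally have nb3: "norm (pd i f ?y1 - pd i f ?y2 - h *\<^sub>R L b) \<le> 3 * e * \<bar>h\<bar>" by simp
      have "onorm (K' t) = onorm (\<lambda>s::real. s) * norm (pd i f ?y1 - pd i f ?y2 - h *\<^sub>R L b)"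
        unfolding K'_def by (rule onorm_scaleR_left) (rule bounded_linear_ident)
      thus ?thesis using nb3 onorm_id[where 'a=real] by simp
    qed
    have "norm (K h - K 0) \<le> 3 * e * \<bar>h\<bar> * norm (h - 0)"
      by (rule differentiable_bound[OF convex_closed_segment derK bnd]) auto
    moreover have "K h - K 0 = f (x + h *\<^sub>R ?a + h *\<^sub>R b) - f (x + h *\<^sub>R ?a) - f (x + h *\<^sub>R b) + f x
           - (h * h) *\<^sub>R L b"
      by (simp add: K_def algebra_simps)
    ultimately show "norm (f (x + h *\<^sub>R ?a + h *\<^sub>R b) - f (x + h *\<^sub>R ?a) - f (x + h *\<^sub>R b) + f x
           - (h * h) *\<^sub>R L b) \<le> 3 * e * (h * h)"
      by (simp add: abs_mult_self_eq mult.assoc)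
  qed
qed

lemma clairaut:
  fixes f :: "real^'n::finite \<Rightarrow> 'b::real_normed_vector"
  assumes U: "open U" "x \<in> U" and fd: "\<And>y. y \<in> U \<Longrightarrow> f differentiable (at y)"
    and di: "pd i f differentiable (at x)" and dj: "pd j f differentiable (at x)"
  shows "pd j (pd i f) x = pd i (pd j f) x"
proof (rule ccontr)
  assume ne: "pd j (pd i f) x \<noteq> pd i (pd j f) x"
  obtain Li where Li: "(pd i f has_derivative Li) (at x)" using di unfolding differentiable_def by blast
  obtain Lj where Lj: "(pd j f has_derivative Lj) (at x)" using dj unfolding differentiable_def by blast
  have e1: "pd j (pd i f) x = Li (axis j 1)" by (rule pd_has_derivative[OF Li])
  have e2: "pd i (pd j f) x = Lj (axis i 1)" by (rule pd_has_derivative[OF Lj])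
  define c where "c = norm (Li (axis j 1) - Lj (axis i 1))"
  have c: "c > 0" using ne e1 e2 c_def by simp
  define e where "e = c / 8"
  have e: "e > 0" using c e_def by simp
  obtain d1 where d1: "d1 > 0" "\<And>h. \<bar>h\<bar> < d1 \<Longrightarrow>
     norm (f (x + h *\<^sub>R axis i 1 + h *\<^sub>R axis j 1) - f (x + h *\<^sub>R axis i 1) - f (x + h *\<^sub>R axis j 1) + f x
           - (h * h) *\<^sub>R Li (axis j 1)) \<le> 3 * e * (h * h)"
    using young_bound[OF U fd Li e, of "axis j 1"] by auto
  obtain d2 where d2: "d2 > 0" "\<And>h. \<bar>h\<bar> < d2 \<Longrightarrow>
     norm (f (x + h *\<^sub>R axis j 1 + h *\<^sub>R axis i 1) - f (x + h *\<^sub>R axis j 1) - f (x + h *\<^sub>R axis i 1) + f x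
           - (h * h) *\<^sub>R Lj (axis i 1)) \<le> 3 * e * (h * h)"
    using young_bound[OF U fd Lj e, of "axis i 1"] by auto
  define h where "h = min d1 d2 / 2"
  have hp: "h > 0" "\<bar>h\<bar> < d1" "\<bar>h\<bar> < d2" using d1 d2 h_def by auto
  define P where "P = f (x + h *\<^sub>R axis i 1 + h *\<^sub>R axis j 1) - f (x + h *\<^sub>R axis i 1) - f (x + h *\<^sub>R axis j 1) + f x"
  have b1: "norm (P - (h * h) *\<^sub>R Li (axis j 1)) \<le> 3 * e * (h * h)"
    using d1(2)[OF hp(2)] unfolding P_def .
  have b2: "norm (P - (h * h) *\<^sub>R Lj (axis i 1)) \<le> 3 * e * (h * h)"
    using d2(2)[OF hp(3)] unfolding P_def by (simp add: algebra_simps)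
  have "(h * h) *\<^sub>R (Li (axis j 1) - Lj (axis i 1)) =
        (P - (h * h) *\<^sub>R Lj (axis i 1)) - (P - (h * h) *\<^sub>R Li (axis j 1))"
    by (simp add: algebra_simps)
  hence "norm ((h * h) *\<^sub>R (Li (axis j 1) - Lj (axis i 1))) \<le> 6 * e * (h * h)"
    using norm_triangle_ineq4[of "P - (h * h) *\<^sub>R Lj (axis i 1)" "P - (h * h) *\<^sub>R Li (axis j 1)"] b1 b2
    by simp
  hence "(h * h) * c \<le> (h * h) * (6 * e)" by (simp add: c_def mult_ac)
  hence "c \<le> 6 * e" using hp(1) by simp
  thus False using c e_def by simp
qed


definition curvA :: "('n::finite\<Rightarrow>'n\<Rightarrow>'n\<Rightarrow>complex) \<Rightarrow> ('n\<Rightarrow>'n\<Rightarrow>'n\<Rightarrow>'n\<Rightarrow>complex) \<Rightarrow> 'n\<Rightarrow>'n\<Rightarrow>'n\<Rightarrow>'n\<Rightarrow>complex" where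
 "curvA G dG k m i j = dG i k j m - dG j k i m - (\<Sum>q\<in>UNIV. G q i m * G k j q) + (\<Sum>q\<in>UNIV. G q j m * G k i q)"
definition tcovA :: "('n::finite\<Rightarrow>'n\<Rightarrow>'n\<Rightarrow>complex) \<Rightarrow> ('n\<Rightarrow>'n\<Rightarrow>'n\<Rightarrow>'n\<Rightarrow>complex) \<Rightarrow> 'n\<Rightarrow>'n\<Rightarrow>'n\<Rightarrow>'n\<Rightarrow>complex" where
 "tcovA G dG p n k i = dG i p n k - dG i p k n + (\<Sum>s\<in>UNIV. G p i s * (G s n k - G s k n))
    - (\<Sum>s\<in>UNIV. G s i n * (G p s k - G p k s)) - (\<Sum>s\<in>UNIV. G s i k * (G p n s - G p s n))"
definition FA where
 "FA w G dG a b m n = (\<Sum>s\<in>UNIV. 2 * w a s * curvA G dG b n m s - w a s * tcovA G dG b n m s)"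
definition dwA :: "('n::finite\<Rightarrow>'n\<Rightarrow>complex) \<Rightarrow> ('n\<Rightarrow>'n\<Rightarrow>'n\<Rightarrow>complex) \<Rightarrow> 'n\<Rightarrow>'n\<Rightarrow>'n\<Rightarrow>complex" where
 "dwA w G l i j = - (\<Sum>k\<in>UNIV. w k j * G i k l + w i k * G j k l)"
definition EA where
 "EA w G dG n i j m = (\<Sum>k\<in>UNIV. dwA w G n k j * G i k m + w k j * dG n i k m + dwA w G n i k * G j k m + w i k * dG n j k m)"

definition symsum :: "('n::finite \<Rightarrow> 'n \<Rightarrow> complex) \<Rightarrow> complex" where
  "symsum f = (\<Sum>x\<in>UNIV. \<Sum>y\<in>UNIV. f x y + f y x) / 2"

lemma to_symsum: "(\<Sum>x\<in>UNIV. \<Sum>y\<in>UNIV. f x y) = symsum (\<lambda>x y. f x y)"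
proof -
  have "(\<Sum>x\<in>UNIV. \<Sum>y\<in>UNIV. f y x) = (\<Sum>x\<in>UNIV. \<Sum>y\<in>UNIV. f x y)"
    by (rule sum.swap)
  thus ?thesis unfolding symsum_def by (simp add: sum.distrib)
qed

lemma key_u:
  fixes u :: "'n::finite\<Rightarrow>'n\<Rightarrow>complex"
  defines "w \<equiv> \<lambda>i j. u i j - u j i"
  shows "FA w G dG a b m n - FA w G dG b a m n - FA w G dG a b n m + FA w G dG b a n m
         = 2 * (EA w G dG m a b n - EA w G dG n a b m)"
  unfolding FA_def EA_def dwA_def curvA_def tcovA_def w_def
  apply (simp add: sum_distrib_left sum_distrib_right sum_subtractf sum.distrib algebra_simps sum_negf)
  apply (simp only: to_symsum)
  apply (simp add: symsum_def sum_distrib_left sum_distrib_right sum_subtractf sum.distrib algebra_simps sum_negf)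
  done
definition FC :: "('n::finite\<Rightarrow>'n\<Rightarrow>complex) \<Rightarrow> ('n\<Rightarrow>'n\<Rightarrow>'n\<Rightarrow>'n\<Rightarrow>complex) \<Rightarrow> ('n\<Rightarrow>'n\<Rightarrow>'n\<Rightarrow>'n\<Rightarrow>complex) \<Rightarrow> 'n\<Rightarrow>'n\<Rightarrow>'n\<Rightarrow>'n\<Rightarrow>complex" where
  "FC w C T a b m n = (\<Sum>s\<in>UNIV. 2 * w a s * C b n m s - w a s * T b n m s)"


lemma symsum_eq:
  fixes F G :: "'n::finite \<Rightarrow> 'n \<Rightarrow> complex"
  assumes "\<And>x y. F x y + F y x = G x y + G y x"
  shows "(\<Sum>x\<in>UNIV. \<Sum>y\<in>UNIV. F x y) = (\<Sum>x\<in>UNIV. \<Sum>y\<in>UNIV. G x y)"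
proof -
  have "(\<Sum>x\<in>UNIV. \<Sum>y\<in>UNIV. F y x) = (\<Sum>x\<in>UNIV. \<Sum>y\<in>UNIV. F x y)" by (rule sum.swap)
  moreover have "(\<Sum>x\<in>UNIV. \<Sum>y\<in>UNIV. G y x) = (\<Sum>x\<in>UNIV. \<Sum>y\<in>UNIV. G x y)" by (rule sum.swap)
  moreover have "(\<Sum>x\<in>UNIV. \<Sum>y\<in>UNIV. F x y + F y x) = (\<Sum>x\<in>UNIV. \<Sum>y\<in>UNIV. G x y + G y x)"
    using assms by simp
  ultimately show ?thesis by (simp add: sum.distrib)
qed

lemma grad_u2:
  fixes u :: "'n::finite\<Rightarrow>'n\<Rightarrow>complex" and cX cY :: "'n\<Rightarrow>'n\<Rightarrow>complex"
  defines "w \<equiv> \<lambda>i j. u i j - u j i"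
  defines "Gr \<equiv> \<lambda>m n. 1/2 * (\<Sum>i\<in>UNIV. \<Sum>j\<in>UNIV. w i j * (cX i m * cY j n))
      + (\<Sum>i\<in>UNIV. \<Sum>j\<in>UNIV. w i j * (cX j m * cY i n))
      + 1/2 * (\<Sum>i\<in>UNIV. \<Sum>j\<in>UNIV. w i j * (cY i m * cX j n))"
  shows "Gr k n = Gr n k"
  unfolding Gr_def w_def
  apply (simp add: sum_distrib_left sum_distrib_right sum_subtractf sum.distrib algebra_simps sum_negf)
  apply (simp only: sum.distrib[symmetric])
  apply (rule symsum_eq)
  apply (simp add: algebra_simps)
  done
lemma swap3: "(\<Sum>i\<in>UNIV. \<Sum>j\<in>UNIV. \<Sum>p\<in>UNIV. f i j p) = (\<Sum>j\<in>UNIV. \<Sum>p\<in>UNIV. \<Sum>i\<in>UNIV. (f i j p :: complex))"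
  by (rule trans[OF sum.swap], rule sum.cong[OF refl], rule sum.swap)

lemma Qcanon:
  fixes w :: "'n::finite\<Rightarrow>'n\<Rightarrow>complex" and X Y :: "'n \<Rightarrow> complex" and C T :: "'n\<Rightarrow>'n\<Rightarrow>'n\<Rightarrow>'n\<Rightarrow>complex"
  shows "(\<Sum>i\<in>UNIV. \<Sum>j\<in>UNIV. w i j * X j * (- (\<Sum>p\<in>UNIV. Y p * C p n m i)))
      + (\<Sum>i\<in>UNIV. \<Sum>j\<in>UNIV. 1/4 * (\<Sum>s\<in>UNIV. w i s * (T j n m s - 2 * C j n m s)) * (X i * Y j + Y i * X j))
    = (\<Sum>a\<in>UNIV. \<Sum>b\<in>UNIV. \<Sum>s\<in>UNIV. X a * Y b * (- (w s a * C b n m s)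
        + 1/4 * (w a s * (T b n m s - 2 * C b n m s)) + 1/4 * (w b s * (T a n m s - 2 * C a n m s))))"
proof -
  have h1: "(\<Sum>i\<in>UNIV. \<Sum>j\<in>UNIV. w i j * X j * (- (\<Sum>p\<in>UNIV. Y p * C p n m i)))
     = (\<Sum>i\<in>UNIV. \<Sum>j\<in>UNIV. \<Sum>p\<in>UNIV. X j * Y p * (- (w i j * C p n m i)))"
    by (simp add: sum_distrib_left sum_negf algebra_simps)
  also have "\<dots> = (\<Sum>j\<in>UNIV. \<Sum>p\<in>UNIV. \<Sum>i\<in>UNIV. X j * Y p * (- (w i j * C p n m i)))"
    by (rule swap3)
  finally have h1': "(\<Sum>i\<in>UNIV. \<Sum>j\<in>UNIV. w i j * X j * (- (\<Sum>p\<in>UNIV. Y p * C p n m i))) =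
     (\<Sum>j\<in>UNIV. \<Sum>p\<in>UNIV. \<Sum>i\<in>UNIV. X j * Y p * (- (w i j * C p n m i)))" .
  have h2: "(\<Sum>i\<in>UNIV. \<Sum>j\<in>UNIV. 1/4 * (\<Sum>s\<in>UNIV. w i s * (T j n m s - 2 * C j n m s)) * (X i * Y j + Y i * X j))
     = (\<Sum>i\<in>UNIV. \<Sum>j\<in>UNIV. \<Sum>s\<in>UNIV. X i * Y j * (1/4 * (w i s * (T j n m s - 2 * C j n m s))))
     + (\<Sum>i\<in>UNIV. \<Sum>j\<in>UNIV. \<Sum>s\<in>UNIV. X j * Y i * (1/4 * (w i s * (T j n m s - 2 * C j n m s))))"
    by (simp add: sum_distrib_left sum_distrib_right sum.distrib sum_subtractf add_divide_distrib diff_divide_distrib algebra_simps)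
  have h3: "(\<Sum>i\<in>UNIV. \<Sum>j\<in>UNIV. \<Sum>s\<in>UNIV. X j * Y i * (1/4 * (w i s * (T j n m s - 2 * C j n m s))))
     = (\<Sum>j\<in>UNIV. \<Sum>i\<in>UNIV. \<Sum>s\<in>UNIV. X j * Y i * (1/4 * (w i s * (T j n m s - 2 * C j n m s))))"
    by (rule sum.swap)
  show ?thesis unfolding h1' h2 h3
    by (simp add: sum.distrib[symmetric] algebra_simps)
qed

lemma alg1_u:
  fixes u :: "'n::finite\<Rightarrow>'n\<Rightarrow>complex" and X Y :: "'n \<Rightarrow> complex"
    and C T :: "'n\<Rightarrow>'n\<Rightarrow>'n\<Rightarrow>'n\<Rightarrow>complex"
  defines "w \<equiv> \<lambda>i j. u i j - u j i"
  defines "q \<equiv> \<lambda>m n. (\<Sum>a\<in>UNIV. \<Sum>b\<in>UNIV. \<Sum>s\<in>UNIV. X a * Y b * (- (w s a * C b n m s)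
        + 1/4 * (w a s * (T b n m s - 2 * C b n m s)) + 1/4 * (w b s * (T a n m s - 2 * C a n m s))))"
  shows "q k n - q n k - (1/2 * (\<Sum>j\<in>UNIV. \<Sum>p\<in>UNIV. \<Sum>i\<in>UNIV. X j * Y p * (w j i * T p n k i))
          - 1/2 * (\<Sum>j\<in>UNIV. \<Sum>p\<in>UNIV. \<Sum>i\<in>UNIV. X j * Y p * (w j i * T p k n i)))
       = 1/4 * (\<Sum>a\<in>UNIV. \<Sum>b\<in>UNIV. X a * Y b * (FC w C T a b k n - FC w C T b a k n - FC w C T a b n k + FC w C T b a n k))"
  unfolding q_def FC_def w_def
  by (simp add: sum_distrib_left sum_distrib_right sum_subtractf sum.distrib algebra_simps sum_negf)

lemma LB:
  fixes G :: "'n::finite\<Rightarrow>'n\<Rightarrow>'n\<Rightarrow>complex" and dG :: "'n\<Rightarrow>'n\<Rightarrow>'n\<Rightarrow>'n\<Rightarrow>complex"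
    and X :: "'n \<Rightarrow> complex" and dX :: "'n \<Rightarrow> 'n \<Rightarrow> complex"
  defines "F0 \<equiv> \<lambda>k n. \<Sum>i\<in>UNIV. (G i n k - G i k n) * X i"
  shows "(\<Sum>i\<in>UNIV. (dG s i n k - dG s i k n) * X i + (G i n k - G i k n) * dX s i)
          - (\<Sum>p\<in>UNIV. G p s k * F0 p n) - (\<Sum>p\<in>UNIV. G p s n * F0 k p)
        = (\<Sum>j\<in>UNIV. tcovA G dG j n k s * X j) + (\<Sum>j\<in>UNIV. (G j n k - G j k n) * (dX s j - (\<Sum>q\<in>UNIV. G q s j * X q)))"
  unfolding F0_def tcovA_def
  apply (simp add: sum_distrib_left sum_distrib_right sum_subtractf sum.distrib algebra_simps sum_negf)
  apply (simp only: sum.distrib[symmetric])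
  apply (rule symsum_eq)
  apply (simp add: algebra_simps)
  done

lemma tcovA_anti: "tcovA G dG p n k i = - tcovA G dG p k n i"
  unfolding tcovA_def by (simp add: sum_distrib_left sum_subtractf sum.distrib algebra_simps)

lemma alg2:
  fixes w :: "'n::finite \<Rightarrow> 'n \<Rightarrow> complex" and G :: "'n\<Rightarrow>'n\<Rightarrow>'n\<Rightarrow>complex"
    and dG Cv :: "'n\<Rightarrow>'n\<Rightarrow>'n\<Rightarrow>'n\<Rightarrow>complex" and X Xb da :: "'n \<Rightarrow> complex"
    and dX :: "'n \<Rightarrow> 'n \<Rightarrow> complex"
  defines "Tc \<equiv> tcovA G dG"
  defines "H \<equiv> \<lambda>i j m n. 1/4 * (\<Sum>s\<in>UNIV. w i s * (Tc j n m s - 2 * Cv j n m s))"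
  defines "cdX \<equiv> \<lambda>i p. dX i p - (\<Sum>q\<in>UNIV. G q i p * X q)"
  defines "TQ \<equiv> \<lambda>(Z1::'n\<Rightarrow>complex) (cdZ::'n\<Rightarrow>'n\<Rightarrow>complex) k n. (\<Sum>i\<in>UNIV. (G i n k - G i k n) * Z1 i)
      + 1/2 * (\<Sum>i\<in>UNIV. \<Sum>j\<in>UNIV. w i j * (\<Sum>p\<in>UNIV. cdZ i p * (Cv p n k j - Cv p k n j)))
      + (\<Sum>i\<in>UNIV. \<Sum>j\<in>UNIV. (H i j k n - H i j n k) * cdZ i j)"
  defines "F0 \<equiv> \<lambda>k n. \<Sum>i\<in>UNIV. (G i n k - G i k n) * X i"
  defines "cd2F \<equiv> \<lambda>j k n. (\<Sum>i\<in>UNIV. (dG j i n k - dG j i k n) * X i + (G i n k - G i k n) * dX j i)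
          - (\<Sum>p\<in>UNIV. G p j k * F0 p n) - (\<Sum>p\<in>UNIV. G p j n * F0 k p)"
  shows "TQ (\<lambda>i. aa * Xb i + ab * X i - 1/2 * (\<Sum>i'\<in>UNIV. \<Sum>j'\<in>UNIV. w i' j' * da i' * cdX j' i))
             (\<lambda>i p. da i * X p + aa * cdX i p) k n
     - (aa * TQ Xb cdX k n + ab * F0 k n - 1/2 * (\<Sum>i\<in>UNIV. \<Sum>j\<in>UNIV. w i j * da i * cd2F j k n))
   = 1/2 * (\<Sum>j\<in>UNIV. \<Sum>p\<in>UNIV. \<Sum>i\<in>UNIV. da j * X p * (w j i * (Tc p n k i - Tc p k n i)))"
proof -
  define P where "P t = 1/2 * (\<Sum>i'\<in>UNIV. \<Sum>j'\<in>UNIV. w i' j' * da i' * cdX j' t)" for t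
  have lin: "TQ (\<lambda>i. aa * Xb i + ab * X i - 1/2 * (\<Sum>i'\<in>UNIV. \<Sum>j'\<in>UNIV. w i' j' * da i' * cdX j' i))
             (\<lambda>i p. da i * X p + aa * cdX i p) k n
      = aa * TQ Xb cdX k n + ab * F0 k n - (\<Sum>t\<in>UNIV. (G t n k - G t k n) * P t)
        + 1/2 * (\<Sum>i\<in>UNIV. \<Sum>j\<in>UNIV. w i j * (\<Sum>p\<in>UNIV. da i * X p * (Cv p n k j - Cv p k n j)))
        + (\<Sum>i\<in>UNIV. \<Sum>j\<in>UNIV. (H i j k n - H i j n k) * (da i * X j))"
    unfolding TQ_def F0_def P_def
    by (simp add: sum_distrib_left sum_distrib_right sum_subtractf sum.distrib algebra_simps diff_divide_distrib add_divide_distrib)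
  have lb: "cd2F j k n = (\<Sum>t\<in>UNIV. Tc t n k j * X t) + (\<Sum>t\<in>UNIV. (G t n k - G t k n) * cdX j t)" for j
    unfolding cd2F_def Tc_def cdX_def using LB[where s=j and G=G and dG=dG and X=X and dX=dX] unfolding F0_def by simp
  have e1: "1/2 * (\<Sum>i\<in>UNIV. \<Sum>j\<in>UNIV. w i j * da i * (\<Sum>t\<in>UNIV. (G t n k - G t k n) * cdX j t))
      = (\<Sum>t\<in>UNIV. (G t n k - G t k n) * P t)"
  proof -
    have "1/2 * (\<Sum>i\<in>UNIV. \<Sum>j\<in>UNIV. w i j * da i * (\<Sum>t\<in>UNIV. (G t n k - G t k n) * cdX j t))
        = (\<Sum>i\<in>UNIV. \<Sum>j\<in>UNIV. \<Sum>t\<in>UNIV. (G t n k - G t k n) * (1/2 * (w i j * da i * cdX j t)))"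
      by (simp add: sum_distrib_left algebra_simps diff_divide_distrib add_divide_distrib)
    also have "\<dots> = (\<Sum>t\<in>UNIV. \<Sum>i\<in>UNIV. \<Sum>j\<in>UNIV. (G t n k - G t k n) * (1/2 * (w i j * da i * cdX j t)))"
      by (rule sym, rule swap3)
    also have "\<dots> = (\<Sum>t\<in>UNIV. (G t n k - G t k n) * P t)"
      unfolding P_def by (simp add: sum_distrib_left algebra_simps diff_divide_distrib add_divide_distrib)
    finally show ?thesis .
  qed
  have e2: "1/2 * (\<Sum>i\<in>UNIV. \<Sum>j\<in>UNIV. w i j * da i * (\<Sum>t\<in>UNIV. Tc t n k j * X t))
      = 1/2 * (\<Sum>i\<in>UNIV. \<Sum>t\<in>UNIV. \<Sum>j\<in>UNIV. da i * X t * (w i j * Tc t n k j))"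
  proof -
    have "(\<Sum>i\<in>UNIV. \<Sum>j\<in>UNIV. w i j * da i * (\<Sum>t\<in>UNIV. Tc t n k j * X t))
        = (\<Sum>i\<in>UNIV. \<Sum>j\<in>UNIV. \<Sum>t\<in>UNIV. da i * X t * (w i j * Tc t n k j))"
      by (simp add: sum_distrib_left algebra_simps diff_divide_distrib add_divide_distrib)
    also have "\<dots> = (\<Sum>i\<in>UNIV. \<Sum>t\<in>UNIV. \<Sum>j\<in>UNIV. da i * X t * (w i j * Tc t n k j))"
      by (rule sum.cong[OF refl], rule sum.swap)
    finally show ?thesis by simp
  qed
  have e3: "(\<Sum>i\<in>UNIV. \<Sum>j\<in>UNIV. w i j * (\<Sum>p\<in>UNIV. da i * X p * (Cv p n k j - Cv p k n j)))
      = (\<Sum>i\<in>UNIV. \<Sum>p\<in>UNIV. \<Sum>j\<in>UNIV. da i * X p * (w i j * (Cv p n k j - Cv p k n j)))"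
  proof -
    have "(\<Sum>i\<in>UNIV. \<Sum>j\<in>UNIV. w i j * (\<Sum>p\<in>UNIV. da i * X p * (Cv p n k j - Cv p k n j)))
       = (\<Sum>i\<in>UNIV. \<Sum>j\<in>UNIV. \<Sum>p\<in>UNIV. da i * X p * (w i j * (Cv p n k j - Cv p k n j)))"
      by (simp add: sum_distrib_left algebra_simps diff_divide_distrib add_divide_distrib)
    also have "\<dots> = (\<Sum>i\<in>UNIV. \<Sum>p\<in>UNIV. \<Sum>j\<in>UNIV. da i * X p * (w i j * (Cv p n k j - Cv p k n j)))"
      by (rule sum.cong[OF refl], rule sum.swap)
    finally show ?thesis .
  qed
  have e4: "(\<Sum>i\<in>UNIV. \<Sum>j\<in>UNIV. (H i j k n - H i j n k) * (da i * X j))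
     = (\<Sum>i\<in>UNIV. \<Sum>p\<in>UNIV. \<Sum>j\<in>UNIV. da i * X p * (1/4 * (w i j * (Tc p n k j - Tc p k n j))
          - 1/2 * (w i j * (Cv p n k j - Cv p k n j))))"
    unfolding H_def by (simp add: sum_distrib_left sum_distrib_right sum_subtractf sum.distrib algebra_simps diff_divide_distrib add_divide_distrib)
  have ta: "\<And>p i. Tc p k n i = - Tc p n k i" unfolding Tc_def by (rule tcovA_anti)
  have "TQ (\<lambda>i. aa * Xb i + ab * X i - 1/2 * (\<Sum>i'\<in>UNIV. \<Sum>j'\<in>UNIV. w i' j' * da i' * cdX j' i))
             (\<lambda>i p. da i * X p + aa * cdX i p) k n
     - (aa * TQ Xb cdX k n + ab * F0 k n - 1/2 * (\<Sum>i\<in>UNIV. \<Sum>j\<in>UNIV. w i j * da i * cd2F j k n))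
    = 1/2 * (\<Sum>i\<in>UNIV. \<Sum>j\<in>UNIV. w i j * (\<Sum>p\<in>UNIV. da i * X p * (Cv p n k j - Cv p k n j)))
        + (\<Sum>i\<in>UNIV. \<Sum>j\<in>UNIV. (H i j k n - H i j n k) * (da i * X j))
        + 1/2 * (\<Sum>i\<in>UNIV. \<Sum>j\<in>UNIV. w i j * da i * (\<Sum>t\<in>UNIV. Tc t n k j * X t))"
    unfolding lin lb using e1
    by (simp add: distrib_left sum.distrib algebra_simps diff_divide_distrib add_divide_distrib)
  also have "\<dots> = 1/2 * (\<Sum>j\<in>UNIV. \<Sum>p\<in>UNIV. \<Sum>i\<in>UNIV. da j * X p * (w j i * (Tc p n k i - Tc p k n i)))"
    unfolding e2 e3 e4 ta
    by (simp add: sum_distrib_left sum_subtractf sum.distrib algebra_simps diff_divide_distrib add_divide_distrib)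
  finally show ?thesis .
qed


lemma pds_const: "pds is (\<lambda>y. c) = (if is = [] then (\<lambda>y. c) else (\<lambda>y. 0))"
proof (induction "is")
  case Nil then show ?case by simp
next
  case (Cons i "is")
  have "pd i (\<lambda>y::real^'a. (c::'b)) = (\<lambda>y. 0)" "pd i (\<lambda>y::real^'a. (0::'b)) = (\<lambda>y. 0)"
    by (auto intro!: ext)
  with Cons show ?case by auto
qed

lemma smooth_const: "smooth_on U (\<lambda>y. c)"
  unfolding smooth_on_def pds_const by auto

lemma smooth_add:
  fixes f g :: "real^'n::finite \<Rightarrow> 'b::real_normed_vector"
  assumes U: "open U" and f: "smooth_on U f" and g: "smooth_on U g"
  shows "smooth_on U (\<lambda>y. f y + g y)"
proof -
  have eq: "\<forall>y\<in>U. pds is (\<lambda>y. f y + g y) y = pds is f y + pds is g y" for "is"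
  proof (induction "is")
    case Nil then show ?case by simp
  next
    case (Cons i "is")
    show ?case
    proof
      fix y assume y: "y \<in> U"
      have "pds (i # is) (\<lambda>y. f y + g y) y = pd i (\<lambda>z. pds is f z + pds is g z) y"
        using pd_local[OF U y, of "pds is (\<lambda>y. f y + g y)" "\<lambda>z. pds is f z + pds is g z"] Cons by simp
      also have "\<dots> = pd i (pds is f) y + pd i (pds is g) y"
        using f g y unfolding smooth_on_def by (intro pd_add) auto
      finally show "pds (i # is) (\<lambda>y. f y + g y) y = pds (i # is) f y + pds (i # is) g y" by simp
    qed
  qed
  show ?thesis unfolding smooth_on_def
  proof (intro allI ballI)
    fix "is" y assume y: "y \<in> U"
    have "(\<lambda>z. pds is f z + pds is g z) differentiable (at y)"
      using f g y unfolding smooth_on_def by auto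
    thus "pds is (\<lambda>y. f y + g y) differentiable (at y)"
      using differentiable_local[OF U y, of "\<lambda>z. pds is f z + pds is g z"] eq by metis
  qed
qed

lemma smooth_scale:
  fixes f :: "real^'n::finite \<Rightarrow> 'b::real_normed_algebra"
  assumes U: "open U" and f: "smooth_on U f"
  shows "smooth_on U (\<lambda>y. c * f y)"
proof -
  have eq: "\<forall>y\<in>U. pds is (\<lambda>y. c * f y) y = c * pds is f y" for "is"
  proof (induction "is")
    case Nil then show ?case by simp
  next
    case (Cons i "is")
    show ?case
    proof
      fix y assume y: "y \<in> U"
      have "pds (i # is) (\<lambda>y. c * f y) y = pd i (\<lambda>z. c * pds is f z) y"
        using pd_local[OF U y, of "pds is (\<lambda>y. c * f y)" "\<lambda>z. c * pds is f z"] Cons by simp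
      also have "\<dots> = c * pd i (pds is f) y"
        using f y unfolding smooth_on_def by (intro pd_cmult) auto
      finally show "pds (i # is) (\<lambda>y. c * f y) y = c * pds (i # is) f y" by simp
    qed
  qed
  show ?thesis unfolding smooth_on_def
  proof (intro allI ballI)
    fix "is" y assume y: "y \<in> U"
    have "(\<lambda>z. c * pds is f z) differentiable (at y)"
      using f y unfolding smooth_on_def by auto
    thus "pds is (\<lambda>y. c * f y) differentiable (at y)"
      using differentiable_local[OF U y, of "\<lambda>z. c * pds is f z"] eq by metis
  qed
qed

lemma smooth_of_real:
  fixes f :: "real^'n::finite \<Rightarrow> real"
  assumes U: "open U" and f: "smooth_on U f"
  shows "smooth_on U (\<lambda>y. (of_real (f y) :: complex))"
proof -
  have eq: "\<forall>y\<in>U. pds is (\<lambda>y. (of_real (f y)::complex)) y = of_real (pds is f y)" for "is"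
  proof (induction "is")
    case Nil then show ?case by simp
  next
    case (Cons i "is")
    show ?case
    proof
      fix y assume y: "y \<in> U"
      have "pds (i # is) (\<lambda>y. (of_real (f y)::complex)) y = pd i (\<lambda>z. (of_real (pds is f z)::complex)) y"
        using pd_local[OF U y, of "pds is (\<lambda>y. (of_real (f y)::complex))" "\<lambda>z. of_real (pds is f z)"] Cons by simp
      also have "\<dots> = of_real (pd i (pds is f) y)"
        using f y unfolding smooth_on_def by (intro pd_of_real) auto
      finally show "pds (i # is) (\<lambda>y. (of_real (f y)::complex)) y = of_real (pds (i # is) f y)" by simp
    qed
  qed
  show ?thesis unfolding smooth_on_def
  proof (intro allI ballI)
    fix "is" y assume y: "y \<in> U"
    have "pds is f differentiable (at y)" using f y unfolding smooth_on_def by auto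
    then obtain D where "(pds is f has_derivative D) (at y)" unfolding differentiable_def by blast
    hence "(\<lambda>z. (of_real (pds is f z)::complex)) differentiable (at y)"
      unfolding differentiable_def by (blast intro: has_derivative_of_real)
    thus "pds is (\<lambda>y. (of_real (f y)::complex)) differentiable (at y)"
      using differentiable_local[OF U y, of "\<lambda>z. of_real (pds is f z)"] eq by metis
  qed
qed

lemma smooth_minus:
  fixes f :: "real^'n::finite \<Rightarrow> 'b::real_normed_algebra_1"
  assumes "open U" "smooth_on U f" shows "smooth_on U (\<lambda>y. - f y)"
  using smooth_scale[OF assms, of "-1"] by simp

lemma smooth_diff:
  fixes f g :: "real^'n::finite \<Rightarrow> 'b::real_normed_algebra_1"
  assumes "open U" "smooth_on U f" "smooth_on U g" shows "smooth_on U (\<lambda>y. f y - g y)"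
  using smooth_add[OF assms(1,2) smooth_minus[OF assms(1,3)]] by simp

lemma smooth_sum:
  fixes f :: "'a \<Rightarrow> real^'n::finite \<Rightarrow> 'b::real_normed_vector"
  assumes U: "open U" and "finite A" and "\<And>a. a \<in> A \<Longrightarrow> smooth_on U (f a)"
  shows "smooth_on U (\<lambda>y. \<Sum>a\<in>A. f a y)"
  using assms(2,3)
proof (induction A rule: finite_induct)
  case empty then show ?case by (simp add: smooth_const)
next
  case (insert a A)
  then show ?case using smooth_add[OF U, of "f a" "\<lambda>y. \<Sum>a\<in>A. f a y"] by simp
qed

definition SP :: "((real^'n::finite \<Rightarrow> 'b::real_normed_algebra) \<times> (real^'n \<Rightarrow> 'b)) list \<Rightarrow> real^'n \<Rightarrow> 'b" where
  "SP ps y = (\<Sum>p\<leftarrow>ps. fst p y * snd p y)"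

definition dps :: "'n::finite \<Rightarrow> ((real^'n \<Rightarrow> 'b::real_normed_algebra) \<times> (real^'n \<Rightarrow> 'b)) list \<Rightarrow> _" where
  "dps i ps = concat (map (\<lambda>p. [(fst p, pd i (snd p)), (pd i (fst p), snd p)]) ps)"

lemma SP_diff:
  assumes "\<forall>p\<in>set ps. fst p differentiable (at x) \<and> snd p differentiable (at x)"
  shows "SP ps differentiable (at x)"
  using assms
proof (induction ps)
  case Nil then show ?case by (simp add: SP_def)
next
  case (Cons p ps)
  have "SP (p # ps) = (\<lambda>y. fst p y * snd p y + SP ps y)" by (auto simp: SP_def)
  then show ?case using Cons by (auto intro!: differentiable_add differentiable_mult)
qed

lemma pd_SP:
  assumes "\<forall>p\<in>set ps. fst p differentiable (at x) \<and> snd p differentiable (at x)"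
  shows "pd i (SP ps) x = SP (dps i ps) x"
  using assms
proof (induction ps)
  case Nil then show ?case by (simp add: SP_def dps_def)
next
  case (Cons p ps)
  have e: "SP (p # ps) = (\<lambda>y. fst p y * snd p y + SP ps y)" by (auto simp: SP_def)
  have d1: "(\<lambda>y. fst p y * snd p y) differentiable (at x)" using Cons by auto
  have d2: "SP ps differentiable (at x)" using Cons SP_diff by auto
  have "pd i (SP (p # ps)) x = pd i (\<lambda>y. fst p y * snd p y) x + pd i (SP ps) x"
    unfolding e by (rule pd_add[OF d1 d2])
  also have "\<dots> = fst p x * pd i (snd p) x + pd i (fst p) x * snd p x + SP (dps i ps) x"
    using Cons by (simp add: pd_mult)
  also have "\<dots> = SP (dps i (p # ps)) x" by (simp add: SP_def dps_def)
  finally show ?case .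
qed

lemma smooth_mult:
  fixes f g :: "real^'n::finite \<Rightarrow> 'b::real_normed_algebra"
  assumes U: "open U" and f: "smooth_on U f" and g: "smooth_on U g"
  shows "smooth_on U (\<lambda>y. f y * g y)"
proof -
  have ex: "\<exists>ps. (\<forall>p\<in>set ps. smooth_on U (fst p) \<and> smooth_on U (snd p)) \<and>
              (\<forall>y\<in>U. pds is (\<lambda>y. f y * g y) y = SP ps y)" for "is"
  proof (induction "is")
    case Nil
    show ?case by (rule exI[of _ "[(f, g)]"]) (auto simp: f g SP_def)
  next
    case (Cons i "is")
    then obtain ps where ps: "\<forall>p\<in>set ps. smooth_on U (fst p) \<and> smooth_on U (snd p)"
      "\<forall>y\<in>U. pds is (\<lambda>y. f y * g y) y = SP ps y" by blast
    show ?case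
    proof (intro exI conjI)
      show "\<forall>p\<in>set (dps i ps). smooth_on U (fst p) \<and> smooth_on U (snd p)"
        using ps(1) by (auto simp: dps_def smooth_pd)
      show "\<forall>y\<in>U. pds (i # is) (\<lambda>y. f y * g y) y = SP (dps i ps) y"
      proof
        fix y assume y: "y \<in> U"
        have "pds (i # is) (\<lambda>y. f y * g y) y = pd i (SP ps) y"
          using pd_local[OF U y, of "pds is (\<lambda>y. f y * g y)" "SP ps"] ps(2) by simp
        also have "\<dots> = SP (dps i ps) y"
          using ps(1) y by (intro pd_SP) (auto intro: smooth_diffble)
        finally show "pds (i # is) (\<lambda>y. f y * g y) y = SP (dps i ps) y" .
      qed
    qed
  qed
  show ?thesis unfolding smooth_on_def
  proof (intro allI ballI)
    fix "is" y assume y: "y \<in> U"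
    obtain ps where ps: "\<forall>p\<in>set ps. smooth_on U (fst p) \<and> smooth_on U (snd p)"
      "\<forall>y\<in>U. pds is (\<lambda>y. f y * g y) y = SP ps y" using ex by blast
    have "SP ps differentiable (at y)" using ps(1) y by (intro SP_diff) (auto intro: smooth_diffble)
    thus "pds is (\<lambda>y. f y * g y) differentiable (at y)"
      using differentiable_local[OF U y, of "SP ps"] ps(2) by metis
  qed
qed

lemma smooth_coord: "smooth_on U (\<lambda>y::real^'n::finite. (of_real (y $ j) :: complex))"
proof -
  have p1: "pd i (\<lambda>y::real^'n. (of_real (y $ j) :: complex)) = (\<lambda>y. of_real (if i = j then 1 else 0))" for i
  proof
    fix x :: "real^'n"
    have "(\<lambda>y::real^'n. y $ j) differentiable (at x)"
      using bounded_linear_vec_nth[of j] bounded_linear_imp_differentiable by blast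
    hence "pd i (\<lambda>y. (of_real (y $ j) :: complex)) x = of_real (pd i (\<lambda>y. y $ j) x)" by (rule pd_of_real)
    thus "pd i (\<lambda>y::real^'n. (of_real (y $ j) :: complex)) x = of_real (if i = j then 1 else 0)"
      by (simp add: pd_coord)
  qed
  have "pds is (\<lambda>y::real^'n. (of_real (y $ j) :: complex)) differentiable (at x)" for "is" x
  proof (cases "is" rule: rev_cases)
    case Nil
    have "(\<lambda>y::real^'n. y $ j) differentiable (at x)"
      using bounded_linear_vec_nth[of j] bounded_linear_imp_differentiable by blast
    then obtain D where D: "((\<lambda>y::real^'n. y $ j) has_derivative D) (at x)" unfolding differentiable_def by blast
    have "((\<lambda>y::real^'n. (of_real (y $ j) :: complex)) has_derivative (\<lambda>y. of_real (D y))) (at x)"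
      using has_derivative_of_real[OF D] by simp
    hence "(\<lambda>y::real^'n. (of_real (y $ j) :: complex)) differentiable (at x)"
      unfolding differentiable_def by blast
    then show ?thesis using Nil by simp
  next
    case (snoc js i)
    show ?thesis unfolding snoc pds_append p1 pds_const by simp
  qed
  thus ?thesis unfolding smooth_on_def by blast
qed


lemma cd_dxf: "cd Ga j (dxf k) = (\<lambda>m y. - complex_of_real (Ga k j m y))"
proof (intro ext)
  fix m y
  have "pd j (\<lambda>x. if m = k then (1::complex) else 0) y = 0" by (rule pd_const)
  moreover have "(\<Sum>i\<in>UNIV. complex_of_real (Ga i j m y) * (if i = k then 1 else 0)) = complex_of_real (Ga k j m y)"
    by (simp add: if_distrib cong: if_cong)
  ultimately show "cd Ga j (dxf k) m y = - complex_of_real (Ga k j m y)"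
    unfolding cd_def dxf_def by simp
qed

lemma diff_of_real:
  fixes f :: "real^'n::finite \<Rightarrow> real"
  assumes "f differentiable (at x)"
  shows "(\<lambda>y. complex_of_real (f y)) differentiable (at x)"
proof -
  obtain D where D: "(f has_derivative D) (at x)" using assms unfolding differentiable_def by blast
  have "((\<lambda>y. complex_of_real (f y)) has_derivative (\<lambda>y. of_real (D y))) (at x)"
    using has_derivative_of_real[OF D] by simp
  thus ?thesis unfolding differentiable_def by blast
qed

lemma cdcd:
  fixes Ga :: "'n::finite chris" and \<beta> :: "'n form1"
  assumes db: "\<And>p. \<beta> p differentiable (at x)" and ddb: "pd j (\<beta> b) differentiable (at x)"
    and dG: "\<And>i. Ga i j b differentiable (at x)"
  shows "cd Ga k (cd Ga j \<beta>) b x = pd k (pd j (\<beta> b)) x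
     - (\<Sum>i\<in>UNIV. complex_of_real (Ga i j b x) * pd k (\<beta> i) x + complex_of_real (pd k (Ga i j b) x) * \<beta> i x)
     - (\<Sum>q\<in>UNIV. complex_of_real (Ga q k b x) * (pd j (\<beta> q) x - (\<Sum>i\<in>UNIV. complex_of_real (Ga i j q x) * \<beta> i x)))"
proof -
  have dOG: "(\<lambda>y. complex_of_real (Ga i j b y)) differentiable (at x)" for i by (rule diff_of_real[OF dG])
  have dprod: "(\<lambda>y. complex_of_real (Ga i j b y) * \<beta> i y) differentiable (at x)" for i
    using dOG db by (rule differentiable_mult)
  have dsum: "(\<lambda>y. \<Sum>i\<in>UNIV. complex_of_real (Ga i j b y) * \<beta> i y) differentiable (at x)"
    using dprod by (intro differentiable_sum) auto
  have e: "cd Ga j \<beta> b = (\<lambda>y. pd j (\<beta> b) y - (\<Sum>i\<in>UNIV. complex_of_real (Ga i j b y) * \<beta> i y))"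
    unfolding cd_def by simp
  have "pd k (cd Ga j \<beta> b) x = pd k (pd j (\<beta> b)) x - pd k (\<lambda>y. \<Sum>i\<in>UNIV. complex_of_real (Ga i j b y) * \<beta> i y) x"
    unfolding e by (rule pd_diff[OF ddb dsum])
  also have "pd k (\<lambda>y. \<Sum>i\<in>UNIV. complex_of_real (Ga i j b y) * \<beta> i y) x
      = (\<Sum>i\<in>UNIV. pd k (\<lambda>y. complex_of_real (Ga i j b y) * \<beta> i y) x)"
    using dprod by (intro pd_sum) auto
  also have "\<dots> = (\<Sum>i\<in>UNIV. complex_of_real (Ga i j b x) * pd k (\<beta> i) x + complex_of_real (pd k (Ga i j b) x) * \<beta> i x)"
    by (intro sum.cong refl, subst pd_mult[OF dOG db], simp add: pd_of_real[OF dG])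
  finally have "pd k (cd Ga j \<beta> b) x = pd k (pd j (\<beta> b)) x
     - (\<Sum>i\<in>UNIV. complex_of_real (Ga i j b x) * pd k (\<beta> i) x + complex_of_real (pd k (Ga i j b) x) * \<beta> i x)" .
  thus ?thesis by (simp add: cd_def[of Ga k] cd_def[of Ga j])
qed


lemma tens_alg:
  fixes G :: "'n::finite\<Rightarrow>'n\<Rightarrow>'n\<Rightarrow>complex" and dG :: "'n\<Rightarrow>'n\<Rightarrow>'n\<Rightarrow>'n\<Rightarrow>complex"
    and B :: "'n \<Rightarrow> complex" and dB :: "'n \<Rightarrow> 'n \<Rightarrow> complex"
  shows "(dd - (\<Sum>i\<in>UNIV. G i j b * dB k i + dG k i j b * B i)
            - (\<Sum>q\<in>UNIV. G q k b * (dB j q - (\<Sum>i\<in>UNIV. G i j q * B i))))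
       - (dd - (\<Sum>i\<in>UNIV. G i k b * dB j i + dG j i k b * B i)
            - (\<Sum>q\<in>UNIV. G q j b * (dB k q - (\<Sum>i\<in>UNIV. G i k q * B i))))
       = - (\<Sum>p\<in>UNIV. B p * curvA G dG p b k j)"
  unfolding curvA_def
  apply (simp add: sum_distrib_left sum_distrib_right sum_subtractf sum.distrib algebra_simps sum_negf)
  apply (simp only: sum.distrib[symmetric])
  apply (rule symsum_eq)
  apply (simp add: algebra_simps)
  done

lemma dxf_app: "dxf k i x = (if i = k then 1 else 0)"
  by (simp add: dxf_def)

lemma pd_dxf: "pd l (dxf k m) = (\<lambda>y. 0)"
  by (rule ext) (simp add: dxf_def)

lemma curv_expand:
  fixes Ga :: "'n::finite chris"
  assumes dG: "\<And>a b c. Ga a b c differentiable (at x)"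
  shows "curv Ga k m i j x = curvA (\<lambda>a b c. complex_of_real (Ga a b c x))
           (\<lambda>l a b c. complex_of_real (pd l (Ga a b c) x)) k m i j"
proof -
  have c: "cd Ga i (cd Ga j (dxf k)) m x = - complex_of_real (pd i (Ga k j m) x)
      + (\<Sum>q\<in>UNIV. complex_of_real (Ga q i m x) * complex_of_real (Ga k j q x))" for i j
  proof -
    have "cd Ga i (cd Ga j (dxf k)) m x = pd i (pd j (dxf k m)) x
     - (\<Sum>i'\<in>UNIV. complex_of_real (Ga i' j m x) * pd i (dxf k i') x + complex_of_real (pd i (Ga i' j m) x) * dxf k i' x)
     - (\<Sum>q\<in>UNIV. complex_of_real (Ga q i m x) * (pd j (dxf k q) x - (\<Sum>i'\<in>UNIV. complex_of_real (Ga i' j q x) * dxf k i' x)))"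
      by (rule cdcd) (simp add: dxf_def, simp add: pd_dxf, rule dG)
    thus ?thesis by (simp add: pd_dxf dxf_app if_distrib sum_negf cong: if_cong)
  qed
  show ?thesis unfolding curv_def comm_def c curvA_def by (simp add: algebra_simps)
qed

lemma tors_cov_expand:
  fixes Ga :: "'n::finite chris"
  assumes dG: "\<And>a b c. Ga a b c differentiable (at x)"
  shows "complex_of_real (tors_cov Ga p n k i x) = tcovA (\<lambda>a b c. complex_of_real (Ga a b c x))
           (\<lambda>l a b c. complex_of_real (pd l (Ga a b c) x)) p n k i"
proof -
  have t: "tors Ga a b c = (\<lambda>y. Ga a b c y - Ga a c b y)" for a b c by (rule ext) (simp add: tors_def)
  have "pd l (tors Ga a b c) x = pd l (Ga a b c) x - pd l (Ga a c b) x" for l a b c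
    unfolding t by (rule pd_diff[OF dG dG])
  thus ?thesis unfolding tors_cov_def tcovA_def by (simp add: tors_def)
qed

lemma tensorial:
  fixes Ga :: "'n::finite chris" and \<beta> :: "'n form1"
  assumes U: "open U" "x \<in> U" and Gs: "\<And>a b c. smooth_on U (Ga a b c)"
    and bs: "\<And>p. smooth_on U (\<beta> p)"
  shows "comm Ga k j \<beta> b x = - (\<Sum>p\<in>UNIV. \<beta> p x * curv Ga p b k j x)"
proof -
  have dG: "\<And>a b c. Ga a b c differentiable (at x)" using Gs U smooth_diffble by blast
  have db: "\<And>p. \<beta> p differentiable (at x)" using bs U smooth_diffble by blast
  have ddb: "\<And>l p. pd l (\<beta> p) differentiable (at x)" using bs U smooth_diffble smooth_pd by blast
  have cl: "pd k (pd j (\<beta> b)) x = pd j (pd k (\<beta> b)) x"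
    by (rule clairaut[OF U]) (use bs U smooth_diffble ddb in auto)
  have c1: "cd Ga k (cd Ga j \<beta>) b x = pd k (pd j (\<beta> b)) x
     - (\<Sum>i\<in>UNIV. complex_of_real (Ga i j b x) * pd k (\<beta> i) x + complex_of_real (pd k (Ga i j b) x) * \<beta> i x)
     - (\<Sum>q\<in>UNIV. complex_of_real (Ga q k b x) * (pd j (\<beta> q) x - (\<Sum>i\<in>UNIV. complex_of_real (Ga i j q x) * \<beta> i x)))"
    by (rule cdcd[OF db ddb dG])
  have c2: "cd Ga j (cd Ga k \<beta>) b x = pd j (pd k (\<beta> b)) x
     - (\<Sum>i\<in>UNIV. complex_of_real (Ga i k b x) * pd j (\<beta> i) x + complex_of_real (pd j (Ga i k b) x) * \<beta> i x)
     - (\<Sum>q\<in>UNIV. complex_of_real (Ga q j b x) * (pd k (\<beta> q) x - (\<Sum>i\<in>UNIV. complex_of_real (Ga i k q x) * \<beta> i x)))"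
    by (rule cdcd[OF db ddb dG])
  have "(\<Sum>p\<in>UNIV. \<beta> p x * curv Ga p b k j x) = (\<Sum>p\<in>UNIV. \<beta> p x * curvA (\<lambda>a b c. complex_of_real (Ga a b c x))
           (\<lambda>l a b c. complex_of_real (pd l (Ga a b c) x)) p b k j)"
    by (simp add: curv_expand[OF dG])
  thus ?thesis
    unfolding comm_def c1 c2 cl
    using tens_alg[where dd="pd j (pd k (\<beta> b)) x" and G="\<lambda>a b c. complex_of_real (Ga a b c x)" and j=j and b=b
        and dB="\<lambda>k i. pd k (\<beta> i) x" and dG="\<lambda>l a b c. complex_of_real (pd l (Ga a b c) x)" and k=k and B="\<lambda>i. \<beta> i x"]
    by simp
qed


lemma hlp3: "(a::complex) + b + c = 0 \<Longrightarrow> a = - b - c"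
proof -
  assume h: "a + b + c = 0"
  have "a = (a + b + c) - b - c" by (simp add: algebra_simps)
  thus ?thesis using h by simp
qed

lemma hlp4: "(a::real) + s = 0 \<Longrightarrow> complex_of_real s = - complex_of_real a"
proof -
  assume "a + s = 0"
  hence "s = - a" by simp
  thus ?thesis by simp
qed

lemma compat_at:
  assumes pc: "poisson_compatible U om Ga" and x: "x \<in> U"
  shows "complex_of_real (pd m (om i j) x) = dwA (\<lambda>a b. complex_of_real (om a b x))
           (\<lambda>a b c. complex_of_real (Ga a b c x)) m i j"
proof -
  have "complex_of_real (pd m (om i j) x)
        - (\<Sum>k\<in>UNIV. complex_of_real (om k j x) * cd Ga k (dxf i) m x)
        - (\<Sum>k\<in>UNIV. complex_of_real (om i k x) * cd Ga k (dxf j) m x) = 0"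
    using pc x unfolding poisson_compatible_def by blast
  thus ?thesis unfolding cd_dxf dwA_def
    by (simp add: sum.distrib sum_negf) (erule hlp3)
qed

lemma compat_real:
  assumes pc: "poisson_compatible U om Ga" and x: "x \<in> U"
  shows "pd m (om i j) x + (\<Sum>k\<in>UNIV. om k j x * Ga i k m x + om i k x * Ga j k m x) = 0"
proof -
  have "complex_of_real (pd m (om i j) x + (\<Sum>k\<in>UNIV. om k j x * Ga i k m x + om i k x * Ga j k m x)) = 0"
    using compat_at[OF pc x, of m i j] unfolding dwA_def by (simp add: algebra_simps)
  thus ?thesis using of_real_eq_0_iff by blast
qed

lemma EA_sym:
  fixes om :: "'n::finite bivec" and Ga :: "'n chris"
  assumes U: "open U" "x \<in> U" and os: "\<And>i j. smooth_on U (om i j)" and Gs: "\<And>a b c. smooth_on U (Ga a b c)"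
    and pc: "poisson_compatible U om Ga"
  defines "w \<equiv> \<lambda>a b. complex_of_real (om a b x)"
  defines "G \<equiv> \<lambda>a b c. complex_of_real (Ga a b c x)"
  defines "dG \<equiv> \<lambda>l a b c. complex_of_real (pd l (Ga a b c) x)"
  shows "EA w G dG n i j m = EA w G dG m i j n"
proof -
  have dO: "\<And>a b. om a b differentiable (at x)" using os U smooth_diffble by blast
  have dG': "\<And>a b c. Ga a b c differentiable (at x)" using Gs U smooth_diffble by blast
  have ddO: "\<And>l a b. pd l (om a b) differentiable (at x)" using os U smooth_diffble smooth_pd by blast
  have E: "EA w G dG n i j m = - complex_of_real (pd n (pd m (om i j)) x)" for n m
  proof -
    define c where "c y = pd m (om i j) y + (\<Sum>k\<in>UNIV. om k j y * Ga i k m y + om i k y * Ga j k m y)" for y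
    have c0: "\<And>y. y \<in> U \<Longrightarrow> c y = 0" unfolding c_def using compat_real[OF pc] by blast
    have "pd n c x = pd n (\<lambda>y. 0) x" by (rule pd_local[OF U]) (simp add: c0)
    hence pc0: "pd n c x = 0" by simp
    have dp: "(\<lambda>y. om a b y * Ga a' b' c' y) differentiable (at x)" for a b a' b' c'
      using dO dG' by (rule differentiable_mult)
    have ds: "(\<lambda>y. \<Sum>k\<in>UNIV. om k j y * Ga i k m y + om i k y * Ga j k m y) differentiable (at x)"
      using dp by (intro differentiable_sum differentiable_add) auto
    have "pd n c x = pd n (pd m (om i j)) x + pd n (\<lambda>y. \<Sum>k\<in>UNIV. om k j y * Ga i k m y + om i k y * Ga j k m y) x"
      unfolding c_def[abs_def] by (rule pd_add[OF ddO ds])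
    also have "pd n (\<lambda>y. \<Sum>k\<in>UNIV. om k j y * Ga i k m y + om i k y * Ga j k m y) x
       = (\<Sum>k\<in>UNIV. pd n (\<lambda>y. om k j y * Ga i k m y + om i k y * Ga j k m y) x)"
      using dp by (intro pd_sum) auto
    also have "\<dots> = (\<Sum>k\<in>UNIV. om k j x * pd n (Ga i k m) x + pd n (om k j) x * Ga i k m x
                      + (om i k x * pd n (Ga j k m) x + pd n (om i k) x * Ga j k m x))"
      by (intro sum.cong refl) (simp add: pd_add[OF dp dp] pd_mult[OF dO dG'])
    finally have r: "pd n (pd m (om i j)) x + (\<Sum>k\<in>UNIV. om k j x * pd n (Ga i k m) x + pd n (om k j) x * Ga i k m x
                      + (om i k x * pd n (Ga j k m) x + pd n (om i k) x * Ga j k m x)) = 0"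
      using pc0 by simp
    have dw: "dwA w G l a b = complex_of_real (pd l (om a b) x)" for l a b
      using compat_at[OF pc U(2)] unfolding w_def G_def by simp
    have "EA w G dG n i j m = (\<Sum>k\<in>UNIV. complex_of_real (om k j x * pd n (Ga i k m) x + pd n (om k j) x * Ga i k m x
                      + (om i k x * pd n (Ga j k m) x + pd n (om i k) x * Ga j k m x)))"
      unfolding EA_def unfolding dw unfolding w_def G_def dG_def by (intro sum.cong refl) (simp add: algebra_simps)
    also have "\<dots> = complex_of_real (\<Sum>k\<in>UNIV. om k j x * pd n (Ga i k m) x + pd n (om k j) x * Ga i k m x
                      + (om i k x * pd n (Ga j k m) x + pd n (om i k) x * Ga j k m x))"
      by (simp only: of_real_sum)
    also have "\<dots> = - complex_of_real (pd n (pd m (om i j)) x)"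
      using r by (rule hlp4)
    finally show ?thesis .
  qed
  have cl: "pd n (pd m (om i j)) x = pd m (pd n (om i j)) x"
    by (rule clairaut[OF U]) (auto intro: smooth_diffble[OF os] ddO)
  show ?thesis unfolding E cl ..
qed

lemma FA_zero:
  fixes om :: "'n::finite bivec" and Ga :: "'n chris"
  assumes U: "open U" "x \<in> U" and os: "\<And>i j. smooth_on U (om i j)" and Gs: "\<And>a b c. smooth_on U (Ga a b c)"
    and pc: "poisson_compatible U om Ga" and pb: "poisson_bivector U om"
  defines "w \<equiv> \<lambda>a b. complex_of_real (om a b x)"
  defines "G \<equiv> \<lambda>a b c. complex_of_real (Ga a b c x)"
  defines "dG \<equiv> \<lambda>l a b c. complex_of_real (pd l (Ga a b c) x)"
  shows "FA w G dG a b m n - FA w G dG b a m n - FA w G dG a b n m + FA w G dG b a n m = 0"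
proof -
  have anti: "w i j = - w j i" for i j
  proof -
    have "om i j x = - om j i x" using pb U(2) unfolding poisson_bivector_def by blast
    thus ?thesis unfolding w_def by simp
  qed
  define u where "u i j = w i j / 2" for i j
  have wu: "w = (\<lambda>i j. u i j - u j i)"
  proof (intro ext)
    fix i j
    have "w j i = - w i j" by (rule anti)
    thus "w i j = u i j - u j i" by (simp add: u_def field_simps)
  qed
  have "FA w G dG a b m n - FA w G dG b a m n - FA w G dG a b n m + FA w G dG b a n m
        = 2 * (EA w G dG m a b n - EA w G dG n a b m)"
    unfolding wu by (rule key_u)
  also have "EA w G dG m a b n = EA w G dG n a b m"
    unfolding w_def G_def dG_def by (rule EA_sym[OF U os Gs pc])
  finally show ?thesis by simp
qed


definition W0 :: "'n::finite bivec \<Rightarrow> 'n chris \<Rightarrow> 'n ten2 \<times> 'n ten2 \<Rightarrow> 'n ten2 \<times> 'n ten2" where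
  "W0 om Ga s = (alt (fst s), alt (\<lambda>m n x. snd s m n x + (\<Sum>i\<in>UNIV. \<Sum>j\<in>UNIV. Hc om Ga i j m n x * fst s i j x)))"

lemma W0_add: "W0 om Ga (ladd s t) = ladd (W0 om Ga s) (W0 om Ga t)"
  unfolding W0_def ladd_def tadd_def alt_def
  by (auto intro!: ext simp: sum.distrib algebra_simps)

lemma W0_tens: "W0 om Ga (tens1 om Ga xi eta) = wedge1 om Ga xi eta"
  unfolding W0_def tens1_def wedge1_def
  by (auto intro!: ext simp: tprod_def alt_def mult_ac)

definition zf :: "'n form1" where "zf = (\<lambda>m x. 0)"

lemma cd_zf: "cd Ga i zf = zf"
  unfolding cd_def zf_def by (intro ext) simp

lemma cd_zero: "cd Ga i (\<lambda>m x. 0) = (\<lambda>m x. 0)"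
  unfolding cd_def by (intro ext) simp

lemma tens1_T0: "tens1 om Ga (zf, zf) (zf, zf) = (zten, zten)"
  unfolding tens1_def by (auto intro!: ext simp: tprod_def zf_def zten_def cd_zero)

lemma tens1_T1: "tens1 om Ga (zf, X1) (Y0, zf) = (zten, tprod X1 Y0)"
  unfolding tens1_def by (auto intro!: ext simp: tprod_def zf_def zten_def cd_zero)

definition restr :: "'n ten2 \<Rightarrow> 'n set \<Rightarrow> 'n ten2" where
  "restr t L = (\<lambda>m n x. if n \<in> L then t m n x else 0)"

lemma restr_empty: "restr t {} = zten" unfolding restr_def zten_def by simp
lemma restr_UNIV: "restr t UNIV = t" unfolding restr_def by simp
lemma restr_insert: "l \<notin> L \<Longrightarrow> restr t (insert l L) = tadd (restr t L) (tprod (\<lambda>m x. t m l x) (dxf l))"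
  unfolding restr_def tadd_def tprod_def dxf_def by (auto intro!: ext)

lemma tadd_zten: "tadd zten t = t" "tadd t zten = t" unfolding tadd_def zten_def by auto

lemma ladd_cancel: "ladd p q = ladd p r \<Longrightarrow> q = r"
proof -
  assume h: "ladd p q = ladd p r"
  have "fst q = fst r"
  proof (intro ext)
    fix m n x
    have "tadd (fst p) (fst q) m n x = tadd (fst p) (fst r) m n x" using h unfolding ladd_def by simp
    thus "fst q m n x = fst r m n x" unfolding tadd_def by simp
  qed
  moreover have "snd q = snd r"
  proof (intro ext)
    fix m n x
    have "tadd (snd p) (snd q) m n x = tadd (snd p) (snd r) m n x" using h unfolding ladd_def by simp
    thus "snd q m n x = snd r m n x" unfolding tadd_def by simp
  qed
  ultimately show "q = r" by (simp add: prod_eq_iff)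
qed

lemma W_unique:
  fixes W :: "'n::finite ten2 \<times> 'n ten2 \<Rightarrow> 'n ten2 \<times> 'n ten2"
  assumes add: "\<forall>s t. W (ladd s t) = ladd (W s) (W t)"
    and tens: "\<forall>xi eta. W (tens1 om Ga xi eta) = wedge1 om Ga xi eta"
  shows "W = W0 om Ga"
proof -
  let ?P = "\<lambda>s. W s = W0 om Ga s"
  have cl: "?P s \<Longrightarrow> ?P t \<Longrightarrow> ?P (ladd s t)" for s t using add W0_add by metis
  have cn: "?P s \<Longrightarrow> ?P (ladd s t) \<Longrightarrow> ?P t" for s t
    using add W0_add ladd_cancel by metis
  have te: "?P (tens1 om Ga xi eta)" for xi eta using tens W0_tens by metis
  have A: "?P (zten, t)" for t
  proof -
    have "finite L \<Longrightarrow> ?P (zten, restr t L)" for L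
    proof (induction L rule: finite_induct)
      case empty
      show ?case unfolding restr_empty using te[of "(zf,zf)" "(zf,zf)"] tens1_T0 by metis
    next
      case (insert l L)
      have "(zten, restr t (insert l L)) = ladd (zten, restr t L) (zten, tprod (\<lambda>m x. t m l x) (dxf l))"
        unfolding ladd_def restr_insert[OF insert(2)] by (simp add: tadd_zten)
      moreover have "?P (zten, tprod (\<lambda>m x. t m l x) (dxf l))"
        using te[of "(zf, \<lambda>m x. t m l x)" "(dxf l, zf)"] tens1_T1 by metis
      ultimately show ?case using cl insert(3) by metis
    qed
    from this[of UNIV] show ?thesis by (simp add: restr_UNIV)
  qed
  have B: "?P (s0, t)" for s0 t
  proof -
    have "finite L \<Longrightarrow> \<forall>t. ?P (restr s0 L, t)" for L
    proof (induction L rule: finite_induct)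
      case empty
      show ?case unfolding restr_empty using A by blast
    next
      case (insert l L)
      show ?case
      proof
        fix t
        let ?g = "\<lambda>m x. s0 m l x"
        define R where "R = snd (tens1 om Ga (?g, zf) (dxf l, zf))"
        have tf: "tens1 om Ga (?g, zf) (dxf l, zf) = (tprod ?g (dxf l), R)"
          unfolding R_def by (simp add: tens1_def)
        have "(tprod ?g (dxf l), R) = ladd (zten, R) (tprod ?g (dxf l), zten)"
          unfolding ladd_def by (simp add: tadd_zten)
        hence "?P (ladd (zten, R) (tprod ?g (dxf l), zten))" using te tf by metis
        hence p1: "?P (tprod ?g (dxf l), zten)" using cn A by blast
        have "(restr s0 (insert l L), t) = ladd (restr s0 L, t) (tprod ?g (dxf l), zten)"
          unfolding ladd_def restr_insert[OF insert(2)] by (simp add: tadd_zten)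
        thus "?P (restr s0 (insert l L), t)" using cl insert(3) p1 by metis
      qed
    qed
    from this[of UNIV] show ?thesis by (simp add: restr_UNIV)
  qed
  show ?thesis by (rule ext) (metis B prod.collapse)
qed

lemma wedgeQ_eq: "wedgeQ om Ga = W0 om Ga"
  unfolding wedgeQ_def
proof (rule the_equality)
  show "(\<forall>s t. W0 om Ga (ladd s t) = ladd (W0 om Ga s) (W0 om Ga t)) \<and>
        (\<forall>xi eta. W0 om Ga (tens1 om Ga xi eta) = wedge1 om Ga xi eta)"
    using W0_add W0_tens by blast
next
  fix W assume "(\<forall>s t. W (ladd s t) = ladd (W s) (W t)) \<and>
        (\<forall>xi eta. W (tens1 om Ga xi eta) = wedge1 om Ga xi eta)"
  thus "W = W0 om Ga" using W_unique by blast
qed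


lemma alg1_full:
  fixes w :: "'n::finite\<Rightarrow>'n\<Rightarrow>complex" and X Xb Y Yb :: "'n \<Rightarrow> complex"
    and cX cY :: "'n\<Rightarrow>'n\<Rightarrow>complex" and C T :: "'n\<Rightarrow>'n\<Rightarrow>'n\<Rightarrow>'n\<Rightarrow>complex"
  assumes anti: "\<And>i j. w i j = - w j i"
    and Dh: "\<And>a b m n. FC w C T a b m n - FC w C T b a m n - FC w C T a b n m + FC w C T b a n m = 0"
  defines "H \<equiv> \<lambda>i j m n. 1/4 * (\<Sum>s\<in>UNIV. w i s * (T j n m s - 2 * C j n m s))"
  defines "L \<equiv> \<lambda>m n. (X m * Yb n + Xb m * Y n + 1/2 * (\<Sum>i\<in>UNIV. \<Sum>j\<in>UNIV. w i j * (cX i m * cY j n)))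
      + ((\<Sum>i\<in>UNIV. \<Sum>j\<in>UNIV. w i j * (cX j m * cY i n)) + (\<Sum>i\<in>UNIV. \<Sum>j\<in>UNIV. w i j * X j * (- (\<Sum>p\<in>UNIV. Y p * C p n m i))))
      + (Y m * Xb n + Yb m * X n + 1/2 * (\<Sum>i\<in>UNIV. \<Sum>j\<in>UNIV. w i j * (cY i m * cX j n)))
      + (\<Sum>i\<in>UNIV. \<Sum>j\<in>UNIV. H i j m n * (X i * Y j + 0 + Y i * X j))"
  shows "L k n - L n k = 1/2 * (\<Sum>j\<in>UNIV. \<Sum>p\<in>UNIV. \<Sum>i\<in>UNIV. X j * Y p * (w j i * T p n k i))
          - 1/2 * (\<Sum>j\<in>UNIV. \<Sum>p\<in>UNIV. \<Sum>i\<in>UNIV. X j * Y p * (w j i * T p k n i))"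
proof -
  define u where "u i j = w i j / 2" for i j
  have wu: "w = (\<lambda>i j. u i j - u j i)"
  proof (intro ext)
    fix i j
    have "w j i = - w i j" by (rule anti)
    thus "w i j = u i j - u j i" by (simp add: u_def field_simps)
  qed
  define Gr where "Gr m n = 1/2 * (\<Sum>i\<in>UNIV. \<Sum>j\<in>UNIV. w i j * (cX i m * cY j n))
      + (\<Sum>i\<in>UNIV. \<Sum>j\<in>UNIV. w i j * (cX j m * cY i n))
      + 1/2 * (\<Sum>i\<in>UNIV. \<Sum>j\<in>UNIV. w i j * (cY i m * cX j n))" for m n
  define Qc where "Qc m n = (\<Sum>i\<in>UNIV. \<Sum>j\<in>UNIV. w i j * X j * (- (\<Sum>p\<in>UNIV. Y p * C p n m i)))
      + (\<Sum>i\<in>UNIV. \<Sum>j\<in>UNIV. 1/4 * (\<Sum>s\<in>UNIV. w i s * (T j n m s - 2 * C j n m s)) * (X i * Y j + Y i * X j))" for m n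
  define q where "q m n = (\<Sum>a\<in>UNIV. \<Sum>b\<in>UNIV. \<Sum>s\<in>UNIV. X a * Y b * (- (w s a * C b n m s)
        + 1/4 * (w a s * (T b n m s - 2 * C b n m s)) + 1/4 * (w b s * (T a n m s - 2 * C a n m s))))" for m n
  have Ld: "L m n = Gr m n + Qc m n + (X m * Yb n + Xb m * Y n + Y m * Xb n + Yb m * X n)" for m n
    unfolding L_def Gr_def Qc_def H_def by (simp add: algebra_simps)
  have g: "Gr k n = Gr n k" unfolding Gr_def wu by (rule grad_u2)
  have qc: "Qc m n = q m n" for m n unfolding Qc_def q_def by (rule Qcanon)
  have "q k n - q n k - (1/2 * (\<Sum>j\<in>UNIV. \<Sum>p\<in>UNIV. \<Sum>i\<in>UNIV. X j * Y p * (w j i * T p n k i))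
          - 1/2 * (\<Sum>j\<in>UNIV. \<Sum>p\<in>UNIV. \<Sum>i\<in>UNIV. X j * Y p * (w j i * T p k n i)))
       = 1/4 * (\<Sum>a\<in>UNIV. \<Sum>b\<in>UNIV. X a * Y b * (FC w C T a b k n - FC w C T b a k n - FC w C T a b n k + FC w C T b a n k))"
    unfolding q_def wu by (rule alg1_u)
  also have "\<dots> = 0" by (simp add: Dh)
  finally have "q k n - q n k = 1/2 * (\<Sum>j\<in>UNIV. \<Sum>p\<in>UNIV. \<Sum>i\<in>UNIV. X j * Y p * (w j i * T p n k i))
          - 1/2 * (\<Sum>j\<in>UNIV. \<Sum>p\<in>UNIV. \<Sum>i\<in>UNIV. X j * Y p * (w j i * T p k n i))" by simp
  thus ?thesis unfolding Ld qc g by (simp add: algebra_simps)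
qed


lemma V_unfold:
  fixes om :: "'n::finite bivec" and Ga :: "'n chris" and xi eta :: "'n form1 \<times> 'n form1" and x :: "real^'n"
  defines "V \<equiv> \<lambda>m n. (fst xi m x * snd eta n x + snd xi m x * fst eta n x
        + 1/2 * (\<Sum>i\<in>UNIV. \<Sum>j\<in>UNIV. complex_of_real (om i j x) * (cd Ga i (fst xi) m x * cd Ga j (fst eta) n x)))
      + ((\<Sum>i\<in>UNIV. \<Sum>j\<in>UNIV. complex_of_real (om i j x) * (cd Ga j (fst xi) m x * cd Ga i (fst eta) n x))
         + (\<Sum>i\<in>UNIV. \<Sum>j\<in>UNIV. complex_of_real (om i j x) * fst xi j x * comm Ga m i (fst eta) n x))
      + (fst eta m x * snd xi n x + snd eta m x * fst xi n x
        + 1/2 * (\<Sum>i\<in>UNIV. \<Sum>j\<in>UNIV. complex_of_real (om i j x) * (cd Ga i (fst eta) m x * cd Ga j (fst xi) n x)))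
      + (\<Sum>i\<in>UNIV. \<Sum>j\<in>UNIV. Hc om Ga i j m n x * (fst xi i x * fst eta j x + 0 + fst eta i x * fst xi j x))"
  shows "snd (W0 om Ga (ladd (sigmaQ_el om Ga eta xi) (tens1 om Ga eta xi))) k n x = V k n - V n k"
proof -
  have dl: "(\<Sum>k'\<in>UNIV. c * (dxf k' m x * f k')) = c * f m" for c and f :: "'n \<Rightarrow> complex" and m
  proof -
    have "(\<Sum>k'\<in>UNIV. c * (dxf k' m x * f k')) = (\<Sum>k'\<in>UNIV. if k' = m then c * f m else 0)"
      by (rule sum.cong) (auto simp: dxf_app)
    thus ?thesis by simp
  qed
  show ?thesis
    unfolding V_def W0_def alt_def ladd_def sigmaQ_el_def tens1_def tadd_def tprod_def zten_def
    by (simp add: dl)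
qed

lemma fst_part:
  "fst (W0 om Ga (ladd (sigmaQ_el om Ga eta xi) (tens1 om Ga eta xi))) k n x = 0"
  unfolding W0_def alt_def ladd_def sigmaQ_el_def tens1_def tadd_def tprod_def zten_def
  by (simp add: algebra_simps)

lemma part1_snd:
  fixes om :: "'n::finite bivec" and Ga :: "'n chris" and xi eta :: "'n form1 \<times> 'n form1"
  assumes U: "open U" "x \<in> U" and os: "\<And>i j. smooth_on U (om i j)" and Gs: "\<And>a b c. smooth_on U (Ga a b c)"
    and pb: "poisson_bivector U om" and pc: "poisson_compatible U om Ga"
    and es: "\<And>p. smooth_on U (fst eta p)"
  shows "snd (W0 om Ga (ladd (sigmaQ_el om Ga eta xi) (tens1 om Ga eta xi))) k n x =
         alt (\<lambda>k n x. (1/2) * (\<Sum>j\<in>UNIV. \<Sum>p\<in>UNIV. \<Sum>i\<in>UNIV.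
                        fst xi j x * fst eta p x *
                        complex_of_real (om j i x * tors_cov Ga p n k i x))) k n x"
proof -
  define w where "w i j = complex_of_real (om i j x)" for i j
  define C where "C p n k i = curv Ga p n k i x" for p n k i
  define T where "T p n k i = complex_of_real (tors_cov Ga p n k i x)" for p n k i
  have dG: "\<And>a b c. Ga a b c differentiable (at x)" using Gs U smooth_diffble by blast
  have anti: "w i j = - w j i" for i j
  proof -
    have "om i j x = - om j i x" using pb U(2) unfolding poisson_bivector_def by blast
    thus ?thesis unfolding w_def by simp
  qed
  have FCeq: "FC w C T a b m n = FA w (\<lambda>a b c. complex_of_real (Ga a b c x))
           (\<lambda>l a b c. complex_of_real (pd l (Ga a b c) x)) a b m n" for a b m n
    unfolding FC_def FA_def C_def T_def curv_expand[OF dG] tors_cov_expand[OF dG] ..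
  have Dh: "FC w C T a b m n - FC w C T b a m n - FC w C T a b n m + FC w C T b a n m = 0" for a b m n
    unfolding FCeq w_def by (rule FA_zero[OF U os Gs pc pb])
  have tens: "comm Ga m i (fst eta) n x = - (\<Sum>p\<in>UNIV. fst eta p x * C p n m i)" for m i n
    unfolding C_def by (rule tensorial[OF U Gs es])
  have Hc: "Hc om Ga i j m n x = 1/4 * (\<Sum>s\<in>UNIV. w i s * (T j n m s - 2 * C j n m s))" for i j m n
    unfolding Hc_def w_def T_def C_def by simp
  note main = alg1_full[where w=w and C=C and T=T and X="\<lambda>p. fst xi p x" and Yb="\<lambda>p. snd eta p x"
      and Xb="\<lambda>p. snd xi p x" and Y="\<lambda>p. fst eta p x"
      and cX="\<lambda>i m. cd Ga i (fst xi) m x" and cY="\<lambda>i m. cd Ga i (fst eta) m x" and k=k and n=n, OF anti Dh]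
  show ?thesis
    unfolding V_unfold tens Hc
    using main unfolding w_def T_def alt_def by (simp add: of_real_mult)
qed


lemma smooth_cd:
  fixes Ga :: "'n::finite chris" and \<beta> :: "'n form1"
  assumes U: "open U" and Gs: "\<And>a b c. smooth_on U (Ga a b c)" and bs: "\<And>p. smooth_on U (\<beta> p)"
  shows "smooth_on U (cd Ga i \<beta> p)"
proof -
  have "smooth_on U (\<lambda>y. pd i (\<beta> p) y - (\<Sum>q\<in>UNIV. complex_of_real (Ga q i p y) * \<beta> q y))"
    by (intro smooth_diff[OF U] smooth_pd bs smooth_sum[OF U] smooth_mult[OF U] smooth_of_real[OF U] Gs) auto
  thus ?thesis unfolding cd_def by simp
qed

lemma fstT:
  "fst (torsQ om Ga \<zeta>) k n x = (\<Sum>i\<in>UNIV. complex_of_real (Ga i n k x - Ga i k n x) * fst \<zeta> i x)"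
  unfolding torsQ_def wedgeQ_eq W0_def lsub_def tsub_def nablaQ_def dform_def alt_def cd_def
  by (simp add: sum_subtractf algebra_simps)

lemma sndT:
  fixes om :: "'n::finite bivec" and Ga :: "'n chris" and \<zeta> :: "'n form1 \<times> 'n form1"
  assumes U: "open U" "x \<in> U" and Gs: "\<And>a b c. smooth_on U (Ga a b c)"
    and zs: "\<And>i p. smooth_on U (cd Ga i (fst \<zeta>) p)"
  shows "snd (torsQ om Ga \<zeta>) k n x =
     (\<Sum>i\<in>UNIV. complex_of_real (Ga i n k x - Ga i k n x) * snd \<zeta> i x)
     + 1/2 * (\<Sum>i\<in>UNIV. \<Sum>j\<in>UNIV. complex_of_real (om i j x) * (\<Sum>p\<in>UNIV. cd Ga i (fst \<zeta>) p x * (curv Ga p n k j x - curv Ga p k n j x)))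
     + (\<Sum>i\<in>UNIV. \<Sum>j\<in>UNIV. (Hc om Ga i j k n x - Hc om Ga i j n k x) * cd Ga i (fst \<zeta>) j x)"
proof -
  have tens: "comm Ga m j (cd Ga i (fst \<zeta>)) b x = - (\<Sum>p\<in>UNIV. cd Ga i (fst \<zeta>) p x * curv Ga p b m j x)" for m j i b
    by (rule tensorial[OF U Gs zs])
  have c1: "cd Ga m (snd \<zeta>) b x - pd m (snd \<zeta> b) x = - (\<Sum>i\<in>UNIV. complex_of_real (Ga i m b x) * snd \<zeta> i x)" for m b
    unfolding cd_def by simp
  have "snd (torsQ om Ga \<zeta>) k n x =
     (cd Ga k (snd \<zeta>) n x - pd k (snd \<zeta> n) x) - (cd Ga n (snd \<zeta>) k x - pd n (snd \<zeta> k) x)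
     - 1/2 * (\<Sum>i\<in>UNIV. \<Sum>j\<in>UNIV. complex_of_real (om i j x) * comm Ga k j (cd Ga i (fst \<zeta>)) n x)
     + 1/2 * (\<Sum>i\<in>UNIV. \<Sum>j\<in>UNIV. complex_of_real (om i j x) * comm Ga n j (cd Ga i (fst \<zeta>)) k x)
     + (\<Sum>i\<in>UNIV. \<Sum>j\<in>UNIV. (Hc om Ga i j k n x - Hc om Ga i j n k x) * cd Ga i (fst \<zeta>) j x)"
    unfolding torsQ_def wedgeQ_eq W0_def lsub_def tsub_def nablaQ_def dform_def alt_def
    by (simp add: sum_subtractf algebra_simps)
  also have "\<dots> = (\<Sum>i\<in>UNIV. complex_of_real (Ga i n k x - Ga i k n x) * snd \<zeta> i x)
     + 1/2 * (\<Sum>i\<in>UNIV. \<Sum>j\<in>UNIV. complex_of_real (om i j x) * (\<Sum>p\<in>UNIV. cd Ga i (fst \<zeta>) p x * (curv Ga p n k j x - curv Ga p k n j x)))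
     + (\<Sum>i\<in>UNIV. \<Sum>j\<in>UNIV. (Hc om Ga i j k n x - Hc om Ga i j n k x) * cd Ga i (fst \<zeta>) j x)"
    unfolding c1 tens
    by (simp add: sum_subtractf sum_negf sum.distrib sum_distrib_left algebra_simps)
  finally show ?thesis .
qed


lemma module_diff:
  fixes om :: "'n::finite bivec" and Ga :: "'n chris" and xi :: "'n form1 \<times> 'n form1" and a :: "'n fn \<times> 'n fn"
  assumes U: "open U" "x \<in> U" and Gs: "\<And>a b c. smooth_on U (Ga a b c)"
    and xs: "lsmooth1 U xi" and as: "lsmooth0 U a"
  shows "fst (torsQ om Ga (ract1 om Ga xi a)) k n x = fst (ract2 om Ga (torsQ om Ga xi) a) k n x"
    and "snd (torsQ om Ga (ract1 om Ga xi a)) k n x - snd (ract2 om Ga (torsQ om Ga xi) a) k n x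
       = 1/2 * (\<Sum>j\<in>UNIV. \<Sum>p\<in>UNIV. \<Sum>i\<in>UNIV. pd j (fst a) x * fst xi p x *
            (complex_of_real (om j i x) * (complex_of_real (tors_cov Ga p n k i x) - complex_of_real (tors_cov Ga p k n i x))))"
proof -
  have x0s: "\<And>p. smooth_on U (fst xi p)" using xs unfolding lsmooth1_def by blast
  have a0s: "smooth_on U (fst a)" using as unfolding lsmooth0_def by blast
  have e0s: "\<And>p. smooth_on U (fst (ract1 om Ga xi a) p)"
  proof -
    fix p
    have "smooth_on U (\<lambda>y. fst a y * fst xi p y)" by (rule smooth_mult[OF U(1) a0s x0s])
    thus "smooth_on U (fst (ract1 om Ga xi a) p)" unfolding ract1_def by simp
  qed
  have zsE: "\<And>i p. smooth_on U (cd Ga i (fst (ract1 om Ga xi a)) p)" by (rule smooth_cd[OF U(1) Gs e0s])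
  have zsX: "\<And>i p. smooth_on U (cd Ga i (fst xi) p)" by (rule smooth_cd[OF U(1) Gs x0s])
  have dGa: "\<And>a b c. Ga a b c differentiable (at x)" using Gs U smooth_diffble by blast
  have dx0: "\<And>p. fst xi p differentiable (at x)" using x0s U smooth_diffble by blast
  have da0: "fst a differentiable (at x)" using a0s U smooth_diffble by blast
  show "fst (torsQ om Ga (ract1 om Ga xi a)) k n x = fst (ract2 om Ga (torsQ om Ga xi) a) k n x"
    unfolding fstT ract2_def by (simp add: ract1_def fstT sum_distrib_left algebra_simps)
  define w where "w i j = complex_of_real (om i j x)" for i j
  define G where "G a b c = complex_of_real (Ga a b c x)" for a b c
  define dG where "dG l a b c = complex_of_real (pd l (Ga a b c) x)" for l a b c
  define Cv where "Cv p n k j = curv Ga p n k j x" for p n k j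
  define X where "X p = fst xi p x" for p
  define Xb where "Xb p = snd xi p x" for p
  define da where "da i = pd i (fst a) x" for i
  define dX where "dX l p = pd l (fst xi p) x" for l p
  define aa where "aa = fst a x"
  define ab where "ab = snd a x"
  define cdX where "cdX i p = dX i p - (\<Sum>q\<in>UNIV. G q i p * X q)" for i p
  define H where "H i j m n = 1/4 * (\<Sum>s\<in>UNIV. w i s * (tcovA G dG j n m s - 2 * Cv j n m s))" for i j m n
  define TQ where "TQ Z1 cdZ k n = (\<Sum>i\<in>UNIV. (G i n k - G i k n) * Z1 i)
      + 1/2 * (\<Sum>i\<in>UNIV. \<Sum>j\<in>UNIV. w i j * (\<Sum>p\<in>UNIV. cdZ i p * (Cv p n k j - Cv p k n j)))
      + (\<Sum>i\<in>UNIV. \<Sum>j\<in>UNIV. (H i j k n - H i j n k) * cdZ i j)" for Z1 :: "'n \<Rightarrow> complex" and cdZ k n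
  define F0 where "F0 k n = (\<Sum>i\<in>UNIV. (G i n k - G i k n) * X i)" for k n
  define cd2F where "cd2F j k n = (\<Sum>i\<in>UNIV. (dG j i n k - dG j i k n) * X i + (G i n k - G i k n) * dX j i)
          - (\<Sum>p\<in>UNIV. G p j k * F0 p n) - (\<Sum>p\<in>UNIV. G p j n * F0 k p)" for j k n
  have cdXe: "cd Ga i (fst xi) p x = cdX i p" for i p
    unfolding cd_def cdX_def dX_def G_def X_def by simp
  have Hce: "Hc om Ga i j m n x = H i j m n" for i j m n
    unfolding Hc_def H_def w_def Cv_def G_def dG_def tors_cov_expand[OF dGa] by simp
  have TQe: "snd (torsQ om Ga \<zeta>) k n x = TQ (\<lambda>i. snd \<zeta> i x) (\<lambda>i p. cd Ga i (fst \<zeta>) p x) k n"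
    if "\<And>i p. smooth_on U (cd Ga i (fst \<zeta>) p)" for \<zeta> k n
    unfolding sndT[OF U Gs that] TQ_def Hce by (simp add: w_def G_def Cv_def)
  have sE: "snd (ract1 om Ga xi a) i x = aa * Xb i + ab * X i - 1/2 * (\<Sum>i'\<in>UNIV. \<Sum>j'\<in>UNIV. w i' j' * da i' * cdX j' i)" for i
    unfolding ract1_def aa_def Xb_def ab_def X_def w_def da_def cdXe[symmetric] by simp
  have cE: "cd Ga i (fst (ract1 om Ga xi a)) p x = da i * X p + aa * cdX i p" for i p
  proof -
    have "pd i (\<lambda>y. fst a y * fst xi p y) x = fst a x * pd i (fst xi p) x + pd i (fst a) x * fst xi p x"
      by (rule pd_mult[OF da0 dx0])
    thus ?thesis unfolding ract1_def cd_def cdX_def da_def X_def aa_def dX_def G_def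
      by (simp add: sum_distrib_left algebra_simps)
  qed
  have fc: "fst (torsQ om Ga xi) = (\<lambda>k n y. \<Sum>i\<in>UNIV. complex_of_real (Ga i n k y - Ga i k n y) * fst xi i y)"
    by (intro ext) (rule fstT)
  have fcx: "fst (torsQ om Ga xi) k n x = F0 k n" for k n
    unfolding fc F0_def G_def X_def by simp
  have pdF: "pd j (fst (torsQ om Ga xi) k n) x = (\<Sum>i\<in>UNIV. (dG j i n k - dG j i k n) * X i + (G i n k - G i k n) * dX j i)" for j k n
  proof -
    have d1: "(\<lambda>y. complex_of_real (Ga i n k y - Ga i k n y)) differentiable (at x)" for i
      by (rule diff_of_real) (intro differentiable_diff dGa)
    have d2: "(\<lambda>y. complex_of_real (Ga i n k y - Ga i k n y) * fst xi i y) differentiable (at x)" for i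
      by (rule differentiable_mult[OF d1 dx0])
    have p1: "pd j (\<lambda>y. complex_of_real (Ga i n k y - Ga i k n y)) x = dG j i n k - dG j i k n" for i
    proof -
      have "pd j (\<lambda>y. complex_of_real (Ga i n k y - Ga i k n y)) x = complex_of_real (pd j (\<lambda>y. Ga i n k y - Ga i k n y) x)"
        by (rule pd_of_real) (intro differentiable_diff dGa)
      also have "pd j (\<lambda>y. Ga i n k y - Ga i k n y) x = pd j (Ga i n k) x - pd j (Ga i k n) x"
        by (rule pd_diff[OF dGa dGa])
      finally show ?thesis unfolding dG_def by simp
    qed
    have "pd j (fst (torsQ om Ga xi) k n) x = (\<Sum>i\<in>UNIV. pd j (\<lambda>y. complex_of_real (Ga i n k y - Ga i k n y) * fst xi i y) x)"
      unfolding fc using d2 by (intro pd_sum) auto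
    also have "\<dots> = (\<Sum>i\<in>UNIV. (dG j i n k - dG j i k n) * X i + (G i n k - G i k n) * dX j i)"
      by (intro sum.cong refl, subst pd_mult[OF d1 dx0], subst p1) (simp add: G_def X_def dX_def algebra_simps)
    finally show ?thesis .
  qed
  have cd2e: "cd2 Ga j (fst (torsQ om Ga xi)) k n x = cd2F j k n" for j k n
    unfolding cd2_def cd2F_def pdF fcx G_def by simp
  have Xbe: "(\<lambda>i. snd xi i x) = Xb" by (rule ext) (simp add: Xb_def)
  have R: "snd (ract2 om Ga (torsQ om Ga xi) a) k n x
       = aa * TQ Xb cdX k n + ab * F0 k n - 1/2 * (\<Sum>i\<in>UNIV. \<Sum>j\<in>UNIV. w i j * da i * cd2F j k n)"
    unfolding ract2_def snd_conv TQe[OF zsX] cd2e fcx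
    by (simp add: aa_def ab_def w_def da_def Xbe cdXe)
  have L: "snd (torsQ om Ga (ract1 om Ga xi a)) k n x
       = TQ (\<lambda>i. aa * Xb i + ab * X i - 1/2 * (\<Sum>i'\<in>UNIV. \<Sum>j'\<in>UNIV. w i' j' * da i' * cdX j' i))
             (\<lambda>i p. da i * X p + aa * cdX i p) k n"
    unfolding TQe[OF zsE] sE cE ..
  have Gl: "(\<lambda>a b c. complex_of_real (Ga a b c x)) = G" by (intro ext) (simp add: G_def)
  have dGl: "(\<lambda>l a b c. complex_of_real (pd l (Ga a b c) x)) = dG" by (intro ext) (simp add: dG_def)
  note A = alg2[where w=w and G=G and dG=dG and Cv=Cv and X=X and Xb=Xb and da=da and dX=dX and aa=aa and ab=ab and k=k and n=n]
  show "snd (torsQ om Ga (ract1 om Ga xi a)) k n x - snd (ract2 om Ga (torsQ om Ga xi) a) k n x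
       = 1/2 * (\<Sum>j\<in>UNIV. \<Sum>p\<in>UNIV. \<Sum>i\<in>UNIV. pd j (fst a) x * fst xi p x *
            (complex_of_real (om j i x) * (complex_of_real (tors_cov Ga p n k i x) - complex_of_real (tors_cov Ga p k n i x))))"
    unfolding L R using A
    unfolding TQ_def[abs_def] H_def[abs_def] cdX_def[abs_def] F0_def[abs_def] cd2F_def[abs_def]
    by (simp add: tors_cov_expand[OF dGa] da_def X_def w_def G_def dG_def Gl dGl)
qed


lemma pd_ocoord: "pd i (\<lambda>y::real^'n::finite. complex_of_real (y $ j)) x = (if i = j then 1 else 0)"
proof -
  have "(\<lambda>y::real^'n. y $ j) differentiable (at x)"
    using bounded_linear_vec_nth[of j] bounded_linear_imp_differentiable by blast
  hence "pd i (\<lambda>y. (of_real (y $ j) :: complex)) x = of_real (pd i (\<lambda>y. y $ j) x)" by (rule pd_of_real)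
  thus ?thesis by (simp add: pd_coord)
qed

lemma sum_single:
  fixes g :: "'n::finite \<Rightarrow> 'b::comm_monoid_add"
  assumes "\<And>k. k \<noteq> a \<Longrightarrow> g k = 0"
  shows "(\<Sum>k\<in>UNIV. g k) = g a"
proof -
  have "(\<Sum>k\<in>UNIV. g k) = g a + (\<Sum>k\<in>UNIV - {a}. g k)"
    by (rule sum.remove) auto
  also have "(\<Sum>k\<in>UNIV - {a}. g k) = 0" using assms by (intro sum.neutral) auto
  finally show ?thesis by simp
qed

theorem lemma4p8:
  fixes U :: "(real^'n::finite) set"
    and om :: "'n bivec" and Ga :: "'n chris"
  assumes "open U"
    and "\<forall>i j. smooth_on U (om i j)"
    and "\<forall>i j k. smooth_on U (Ga i j k)"
    and "poisson_bivector U om"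
    and "poisson_compatible U om Ga"
  shows "(\<forall>eta xi. lsmooth1 U eta \<and> lsmooth1 U xi \<longrightarrow>
            (\<forall>x\<in>U. \<forall>k n.
               fst (wedgeQ om Ga (ladd (sigmaQ_el om Ga eta xi) (tens1 om Ga eta xi))) k n x = 0 \<and>
               snd (wedgeQ om Ga (ladd (sigmaQ_el om Ga eta xi) (tens1 om Ga eta xi))) k n x =
                 alt (\<lambda>k n x. (1/2) * (\<Sum>j\<in>UNIV. \<Sum>p\<in>UNIV. \<Sum>i\<in>UNIV.
                        fst xi j x * fst eta p x *
                        complex_of_real (om j i x * tors_cov Ga p n k i x))) k n x))
         \<and> (right_module_map U om Ga (torsQ om Ga) \<longleftrightarrow>
              (\<forall>x\<in>U. \<forall>j p n k. (\<Sum>i\<in>UNIV. om j i x * tors_cov Ga p n k i x) = 0))"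
proof -
  have U: "open U" using assms(1) .
  have os: "\<And>i j. smooth_on U (om i j)" using assms(2) by blast
  have Gs: "\<And>a b c. smooth_on U (Ga a b c)" using assms(3) by blast
  have pb: "poisson_bivector U om" and pc: "poisson_compatible U om Ga" using assms(4,5) by auto
  have P1: "\<forall>eta xi. lsmooth1 U eta \<and> lsmooth1 U xi \<longrightarrow>
            (\<forall>x\<in>U. \<forall>k n.
               fst (wedgeQ om Ga (ladd (sigmaQ_el om Ga eta xi) (tens1 om Ga eta xi))) k n x = 0 \<and>
               snd (wedgeQ om Ga (ladd (sigmaQ_el om Ga eta xi) (tens1 om Ga eta xi))) k n x =
                 alt (\<lambda>k n x. (1/2) * (\<Sum>j\<in>UNIV. \<Sum>p\<in>UNIV. \<Sum>i\<in>UNIV.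
                        fst xi j x * fst eta p x *
                        complex_of_real (om j i x * tors_cov Ga p n k i x))) k n x)"
  proof (intro allI impI ballI conjI)
    fix eta xi x k n
    assume sm: "lsmooth1 U eta \<and> lsmooth1 U xi" and x: "x \<in> U"
    have es: "\<And>p. smooth_on U (fst eta p)" using sm unfolding lsmooth1_def by blast
    show "fst (wedgeQ om Ga (ladd (sigmaQ_el om Ga eta xi) (tens1 om Ga eta xi))) k n x = 0"
      unfolding wedgeQ_eq by (rule fst_part)
    show "snd (wedgeQ om Ga (ladd (sigmaQ_el om Ga eta xi) (tens1 om Ga eta xi))) k n x =
                 alt (\<lambda>k n x. (1/2) * (\<Sum>j\<in>UNIV. \<Sum>p\<in>UNIV. \<Sum>i\<in>UNIV.
                        fst xi j x * fst eta p x *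
                        complex_of_real (om j i x * tors_cov Ga p n k i x))) k n x"
      unfolding wedgeQ_eq by (rule part1_snd[OF U x os Gs pb pc es])
  qed
  have tanti: "tors_cov Ga p k n i x = - tors_cov Ga p n k i x" if x: "x \<in> U" for p k n i x
  proof -
    have dG: "\<And>a b c. Ga a b c differentiable (at x)" using Gs x smooth_diffble by blast
    have "complex_of_real (tors_cov Ga p k n i x) = - complex_of_real (tors_cov Ga p n k i x)"
      unfolding tors_cov_expand[OF dG] by (rule tcovA_anti)
    thus ?thesis by (metis of_real_eq_iff of_real_minus)
  qed
  have P2: "right_module_map U om Ga (torsQ om Ga) \<longleftrightarrow>
              (\<forall>x\<in>U. \<forall>j p n k. (\<Sum>i\<in>UNIV. om j i x * tors_cov Ga p n k i x) = 0)"
  proof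
    assume cond: "\<forall>x\<in>U. \<forall>j p n k. (\<Sum>i\<in>UNIV. om j i x * tors_cov Ga p n k i x) = 0"
    show "right_module_map U om Ga (torsQ om Ga)"
      unfolding right_module_map_def
    proof (intro allI impI ballI conjI)
      fix xi a x m n
      assume sm: "lsmooth1 U xi \<and> lsmooth0 U a" and x: "x \<in> U"
      show "fst (torsQ om Ga (ract1 om Ga xi a)) m n x = fst (ract2 om Ga (torsQ om Ga xi) a) m n x"
        using module_diff(1)[where Ga=Ga and om=om, OF U x Gs] sm by blast
      have z: "(\<Sum>i\<in>UNIV. complex_of_real (om j i x) * (complex_of_real (tors_cov Ga p n m i x) - complex_of_real (tors_cov Ga p m n i x))) = 0" for j p
      proof -
        have "(\<Sum>i\<in>UNIV. complex_of_real (om j i x) * (complex_of_real (tors_cov Ga p n m i x) - complex_of_real (tors_cov Ga p m n i x)))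
           = complex_of_real (\<Sum>i\<in>UNIV. om j i x * tors_cov Ga p n m i x) - complex_of_real (\<Sum>i\<in>UNIV. om j i x * tors_cov Ga p m n i x)"
          by (simp add: sum_subtractf algebra_simps)
        thus ?thesis using cond x by simp
      qed
      have "(\<Sum>j\<in>UNIV. \<Sum>p\<in>UNIV. \<Sum>i\<in>UNIV. pd j (fst a) x * fst xi p x *
            (complex_of_real (om j i x) * (complex_of_real (tors_cov Ga p n m i x) - complex_of_real (tors_cov Ga p m n i x))))
         = (\<Sum>j\<in>UNIV. \<Sum>p\<in>UNIV. pd j (fst a) x * fst xi p x *
            (\<Sum>i\<in>UNIV. complex_of_real (om j i x) * (complex_of_real (tors_cov Ga p n m i x) - complex_of_real (tors_cov Ga p m n i x))))"
        by (simp add: sum_distrib_left)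
      also have "\<dots> = 0" by (simp add: z)
      finally have "snd (torsQ om Ga (ract1 om Ga xi a)) m n x - snd (ract2 om Ga (torsQ om Ga xi) a) m n x = 0"
        using module_diff(2)[where Ga=Ga and om=om and xi=xi and a=a and k=m and n=n, OF U x Gs] sm by simp
      thus "snd (torsQ om Ga (ract1 om Ga xi a)) m n x = snd (ract2 om Ga (torsQ om Ga xi) a) m n x"
        by simp
    qed
  next
    assume rmm: "right_module_map U om Ga (torsQ om Ga)"
    show "\<forall>x\<in>U. \<forall>j p n k. (\<Sum>i\<in>UNIV. om j i x * tors_cov Ga p n k i x) = 0"
    proof (intro ballI allI)
      fix x j p n k assume x: "x \<in> U"
      define xi :: "'n form1 \<times> 'n form1" where "xi = (dxf p, \<lambda>m y. 0)"
      define a :: "'n fn \<times> 'n fn" where "a = (\<lambda>y. complex_of_real (y $ j), \<lambda>y. 0)"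
      have xs: "lsmooth1 U xi" unfolding lsmooth1_def xi_def dxf_def by (simp add: smooth_const)
      have as: "lsmooth0 U a" unfolding lsmooth0_def a_def by (simp add: smooth_const smooth_coord)
      have "snd (torsQ om Ga (ract1 om Ga xi a)) k n x = snd (ract2 om Ga (torsQ om Ga xi) a) k n x"
        using rmm xs as x unfolding right_module_map_def by blast
      hence "1/2 * (\<Sum>j'\<in>UNIV. \<Sum>p'\<in>UNIV. \<Sum>i\<in>UNIV. pd j' (fst a) x * fst xi p' x *
            (complex_of_real (om j' i x) * (complex_of_real (tors_cov Ga p' n k i x) - complex_of_real (tors_cov Ga p' k n i x)))) = 0"
        using module_diff(2)[where Ga=Ga and om=om and k=k and n=n, OF U x Gs xs as] by simp
      moreover have "(\<Sum>j'\<in>UNIV. \<Sum>p'\<in>UNIV. \<Sum>i\<in>UNIV. pd j' (fst a) x * fst xi p' x *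
            (complex_of_real (om j' i x) * (complex_of_real (tors_cov Ga p' n k i x) - complex_of_real (tors_cov Ga p' k n i x))))
         = (\<Sum>i\<in>UNIV. complex_of_real (om j i x) * (complex_of_real (tors_cov Ga p n k i x) - complex_of_real (tors_cov Ga p k n i x)))"
      proof -
        have "(\<Sum>j'\<in>UNIV. \<Sum>p'\<in>UNIV. \<Sum>i\<in>UNIV. pd j' (fst a) x * fst xi p' x *
            (complex_of_real (om j' i x) * (complex_of_real (tors_cov Ga p' n k i x) - complex_of_real (tors_cov Ga p' k n i x))))
          = (\<Sum>p'\<in>UNIV. \<Sum>i\<in>UNIV. pd j (fst a) x * fst xi p' x *
            (complex_of_real (om j i x) * (complex_of_real (tors_cov Ga p' n k i x) - complex_of_real (tors_cov Ga p' k n i x))))"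
          by (rule sum_single) (simp add: a_def pd_ocoord)
        also have "\<dots> = (\<Sum>i\<in>UNIV. pd j (fst a) x * fst xi p x *
            (complex_of_real (om j i x) * (complex_of_real (tors_cov Ga p n k i x) - complex_of_real (tors_cov Ga p k n i x))))"
          by (rule sum_single) (simp add: xi_def dxf_app)
        finally show ?thesis by (simp add: a_def xi_def pd_ocoord dxf_app)
      qed
      ultimately have "(\<Sum>i\<in>UNIV. complex_of_real (om j i x) * (complex_of_real (tors_cov Ga p n k i x) - complex_of_real (tors_cov Ga p k n i x))) = 0"
        by simp
      moreover have ta: "\<And>i. tors_cov Ga p k n i x = - tors_cov Ga p n k i x" using tanti[OF x] by blast
      ultimately have "(\<Sum>i\<in>UNIV. complex_of_real (om j i x) * (2 * complex_of_real (tors_cov Ga p n k i x))) = 0"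
        by (simp add: ta)
      hence "complex_of_real (2 * (\<Sum>i\<in>UNIV. om j i x * tors_cov Ga p n k i x)) = 0"
        by (simp add: sum_distrib_left algebra_simps)
      hence "2 * (\<Sum>i\<in>UNIV. om j i x * tors_cov Ga p n k i x) = 0" by (simp only: of_real_eq_0_iff)
      thus "(\<Sum>i\<in>UNIV. om j i x * tors_cov Ga p n k i x) = 0" by simp
    qed
  qed
  show ?thesis using P1 P2 by blast
qed


end
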